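(* Let $\mathcal{A}$ be a $C^{\ast}$-algebra faithfully and non-degenerately represented on $\mathcal{H}$, let $(e_i)_{i\in\mathcal{I}}$ be a norm-bounded approximate unit for $\mathcal{A}$ indexed by a directed set $\mathcal{I}$, and let $\mathcal{U}$ be a cofinal ultrafilter over $\mathcal{I}$. Then $\mathcal{A}^{s\mathcal{U}}/J$ is the multiplier algebra of $\mathcal{A}$: $\mathcal{A}$ (embedded via constant families) is an essential ideal of $\mathcal{A}^{s\mathcal{U}}/J$, and for every $C^{\ast}$-algebra $\mathcal{B}$ containing $\mathcal{A}$ as an ideal there is a unique $\ast$-homomorphism $\varphi:\mathcal{B}\to\mathcal{A}^{s\mathcal{U}}/J$ with $\varphi(a)=a$ for all $a\in\mathcal{A}$ (namely $\varphi(b)$ is the class of $(be_i)_{i\in\mathcal{I}}$).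
   Context: An ultrafilter $\mathcal{U}$ over a directed set $\mathcal{I}$ is cofinal if $\{i\in\mathcal{I}: i\ge i_0\}\in\mathcal{U}$ for every $i_0\in\mathcal{I}$. $\mathcal{A}^{\mathcal{U}}$ is the quotient of the bounded families $\prod_{\mathcal{I}}\mathcal{A}$ by those with $\lim_{\mathcal{U}}\|a_i\|=0$, normed by $\lim_{\mathcal{U}}\|a_i\|$. A family $(a_i)$ is $\mathcal{U}$-strict convergent to $a_{\mathcal{U}}\in B(\mathcal{H})$ if for every $x\in\mathcal{A}$ and $\varepsilon>0$, $\{i:\|a_ix-a_{\mathcal{U}}x\|<\varepsilon,\ \|xa_i-xa_{\mathcal{U}}\|<\varepsilon\}\in\mathcal{U}$. $\mathcal{A}^{s\mathcal{U}}\subset\mathcal{A}^{\mathcal{U}}$ is the $C^{\ast}$-subalgebra of classes that are $\mathcal{U}$-strict convergent to some operator in $B(\mathcal{H})$, and $J$ is its closed ideal of classes $\mathcal{U}$-strict convergent to $0$. *)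

theory Defs
  imports "HOL-Analysis.Analysis"
begin

class complex_vector = real_vector +
  fixes scaleC :: "complex \<Rightarrow> 'a \<Rightarrow> 'a"
  assumes scaleC_add_right: "scaleC a (x + y) = scaleC a x + scaleC a y"
    and scaleC_add_left: "scaleC (a + b) x = scaleC a x + scaleC b x"
    and scaleC_scaleC: "scaleC a (scaleC b x) = scaleC (a * b) x"
    and scaleC_one: "scaleC 1 x = x"
    and scaleR_scaleC: "scaleR r x = scaleC (complex_of_real r) x"

class complex_normed_vector = complex_vector + real_normed_vector +
  assumes norm_scaleC: "norm (scaleC a x) = cmod a * norm x"

class complex_inner = complex_normed_vector +
  fixes cinner :: "'a \<Rightarrow> 'a \<Rightarrow> complex"
  assumes cinner_commute: "cinner x y = cnj (cinner y x)"
    and cinner_add_left: "cinner (x + y) z = cinner x z + cinner y z"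
    and cinner_scaleC_left: "cinner (scaleC c x) y = cnj c * cinner x y"
    and cinner_norm: "cinner x x = complex_of_real ((norm x)\<^sup>2)"

class chilbert_space = complex_inner + complete_space

class cstar_algebra = complex_normed_vector + real_normed_algebra + complete_space +
  fixes cstar :: "'a \<Rightarrow> 'a"
  assumes scaleC_mult_left: "scaleC c x * y = scaleC c (x * y)"
    and scaleC_mult_right: "x * scaleC c y = scaleC c (x * y)"
    and cstar_cstar: "cstar (cstar x) = x"
    and cstar_add: "cstar (x + y) = cstar x + cstar y"
    and cstar_scaleC: "cstar (scaleC c x) = scaleC (cnj c) (cstar x)"
    and cstar_mult: "cstar (x * y) = cstar y * cstar x"
    and cstar_identity: "norm (cstar x * x) = norm x * norm x"

definition bop :: "('h::chilbert_space \<Rightarrow> 'h) \<Rightarrow> bool" where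
  "bop T \<longleftrightarrow> bounded_linear T \<and> (\<forall>c x. T (scaleC c x) = scaleC c (T x))"

definition adj :: "('h::chilbert_space \<Rightarrow> 'h) \<Rightarrow> ('h \<Rightarrow> 'h)" where
  "adj T = (THE S. \<forall>x y. cinner (T x) y = cinner x (S y))"

text \<open>Operator norm on B(H) is \<open>onorm\<close>. A concrete C*-algebra of operators
  (i.e. a C*-algebra faithfully represented on H):\<close>
definition cstar_subalg :: "('h::chilbert_space \<Rightarrow> 'h) set \<Rightarrow> bool" where
  "cstar_subalg A \<longleftrightarrow>
     A \<subseteq> Collect bop \<and> (\<lambda>x. 0) \<in> A \<and>
     (\<forall>S\<in>A. \<forall>T\<in>A. (\<lambda>x. S x + T x) \<in> A \<and> S \<circ> T \<in> A) \<and>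
     (\<forall>c. \<forall>T\<in>A. (\<lambda>x. scaleC c (T x)) \<in> A) \<and>
     (\<forall>T\<in>A. adj T \<in> A) \<and>
     (\<forall>T. bop T \<and> (\<forall>\<epsilon>>0. \<exists>S\<in>A. onorm (\<lambda>x. T x - S x) < \<epsilon>) \<longrightarrow> T \<in> A)"

definition nondegenerate :: "('h::chilbert_space \<Rightarrow> 'h) set \<Rightarrow> bool" where
  "nondegenerate A \<longleftrightarrow> closure (span {a x |a x. a \<in> A}) = UNIV"

definition directed :: "('i \<Rightarrow> 'i \<Rightarrow> bool) \<Rightarrow> bool" where
  "directed le \<longleftrightarrow> (\<forall>i. le i i) \<and> (\<forall>i j k. le i j \<longrightarrow> le j k \<longrightarrow> le i k) \<and>
     (\<forall>i j. \<exists>k. le i k \<and> le j k)"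

definition net_filter :: "('i \<Rightarrow> 'i \<Rightarrow> bool) \<Rightarrow> 'i filter" where
  "net_filter le = (INF i0. principal {i. le i0 i})"

definition approx_unit :: "('h::chilbert_space \<Rightarrow> 'h) set \<Rightarrow> ('i \<Rightarrow> 'i \<Rightarrow> bool) \<Rightarrow> ('i \<Rightarrow> 'h \<Rightarrow> 'h) \<Rightarrow> bool" where
  "approx_unit A le e \<longleftrightarrow> (\<forall>i. e i \<in> A) \<and>
     (\<forall>a\<in>A. ((\<lambda>i. onorm (\<lambda>x. e i (a x) - a x)) \<longlongrightarrow> 0) (net_filter le) \<and>
            ((\<lambda>i. onorm (\<lambda>x. a (e i x) - a x)) \<longlongrightarrow> 0) (net_filter le))"

definition ultrafilter :: "'i filter \<Rightarrow> bool" where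
  "ultrafilter U \<longleftrightarrow> U \<noteq> bot \<and> (\<forall>P. eventually P U \<or> eventually (\<lambda>x. \<not> P x) U)"

definition cofinal :: "('i \<Rightarrow> 'i \<Rightarrow> bool) \<Rightarrow> 'i filter \<Rightarrow> bool" where
  "cofinal le U \<longleftrightarrow> (\<forall>i0. eventually (\<lambda>i. le i0 i) U)"

definition bfam :: "('h::chilbert_space \<Rightarrow> 'h) set \<Rightarrow> ('i \<Rightarrow> 'h \<Rightarrow> 'h) \<Rightarrow> bool" where
  "bfam A F \<longleftrightarrow> (\<forall>i. F i \<in> A) \<and> (\<exists>C. \<forall>i. onorm (F i) \<le> C)"

definition strict_conv :: "('h::chilbert_space \<Rightarrow> 'h) set \<Rightarrow> 'i filter \<Rightarrow> ('i \<Rightarrow> 'h \<Rightarrow> 'h) \<Rightarrow> ('h \<Rightarrow> 'h) \<Rightarrow> bool" where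
  "strict_conv A U F T \<longleftrightarrow>
     (\<forall>x\<in>A. \<forall>\<epsilon>>0. eventually (\<lambda>i. onorm (\<lambda>h. F i (x h) - T (x h)) < \<epsilon> \<and>
                                    onorm (\<lambda>h. x (F i h) - x (T h)) < \<epsilon>) U)"

text \<open>Representing families of the classes in A^{sU}.\<close>
definition sU_fams :: "('h::chilbert_space \<Rightarrow> 'h) set \<Rightarrow> 'i filter \<Rightarrow> ('i \<Rightarrow> 'h \<Rightarrow> 'h) set" where
  "sU_fams A U = {F. bfam A F \<and> (\<exists>T. bop T \<and> strict_conv A U F T)}"

text \<open>The coset of (the class of) F modulo J, as a set of representing families.
  (Families with U-null difference lie in the same coset since J contains the zero class.)\<close>
definition qclass :: "('h::chilbert_space \<Rightarrow> 'h) set \<Rightarrow> 'i filter \<Rightarrow> ('i \<Rightarrow> 'h \<Rightarrow> 'h) \<Rightarrow> ('i \<Rightarrow> 'h \<Rightarrow> 'h) set" where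
  "qclass A U F = {G \<in> sU_fams A U. strict_conv A U (\<lambda>i h. F i h - G i h) (\<lambda>h. 0)}"

definition Q :: "('h::chilbert_space \<Rightarrow> 'h) set \<Rightarrow> 'i filter \<Rightarrow> ('i \<Rightarrow> 'h \<Rightarrow> 'h) set set" where
  "Q A U = qclass A U ` sU_fams A U"

definition qrep :: "('i \<Rightarrow> 'h \<Rightarrow> 'h) set \<Rightarrow> ('i \<Rightarrow> 'h \<Rightarrow> 'h)" where
  "qrep c = (SOME F. F \<in> c)"

definition qzero :: "('h::chilbert_space \<Rightarrow> 'h) set \<Rightarrow> 'i filter \<Rightarrow> ('i \<Rightarrow> 'h \<Rightarrow> 'h) set" where
  "qzero A U = qclass A U (\<lambda>i h. 0)"

definition qadd where
  "qadd A U c d = qclass A U (\<lambda>i h. qrep c i h + qrep d i h)"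

definition qscale where
  "qscale A U z c = qclass A U (\<lambda>i h. scaleC z (qrep c i h))"

definition qmul where
  "qmul A U c d = qclass A U (\<lambda>i h. qrep c i (qrep d i h))"

definition qstar where
  "qstar A U c = qclass A U (\<lambda>i. adj (qrep c i))"

text \<open>Quotient norm: norm of A^U is the U-limit of the norms; quotient by J takes the infimum over the coset.\<close>
definition qnorm :: "('h::chilbert_space \<Rightarrow> 'h) set \<Rightarrow> 'i filter \<Rightarrow> ('i \<Rightarrow> 'h \<Rightarrow> 'h) set \<Rightarrow> real" where
  "qnorm A U c = Inf ((\<lambda>G. Lim U (\<lambda>i. onorm (G i))) ` c)"

definition qconst :: "('h::chilbert_space \<Rightarrow> 'h) set \<Rightarrow> 'i filter \<Rightarrow> ('h \<Rightarrow> 'h) \<Rightarrow> ('i \<Rightarrow> 'h \<Rightarrow> 'h) set" where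
  "qconst A U a = qclass A U (\<lambda>i. a)"

definition qclosed :: "('h::chilbert_space \<Rightarrow> 'h) set \<Rightarrow> 'i filter \<Rightarrow> ('i \<Rightarrow> 'h \<Rightarrow> 'h) set set \<Rightarrow> bool" where
  "qclosed A U S \<longleftrightarrow> (\<forall>c\<in>Q A U. (\<forall>\<epsilon>>0. \<exists>d\<in>S. qnorm A U (qadd A U c (qscale A U (-1) d)) < \<epsilon>) \<longrightarrow> c \<in> S)"

definition q_ideal :: "('h::chilbert_space \<Rightarrow> 'h) set \<Rightarrow> 'i filter \<Rightarrow> ('i \<Rightarrow> 'h \<Rightarrow> 'h) set set \<Rightarrow> bool" where
  "q_ideal A U S \<longleftrightarrow> S \<subseteq> Q A U \<and> qzero A U \<in> S \<and>
     (\<forall>c\<in>S. \<forall>d\<in>S. qadd A U c d \<in> S) \<and> (\<forall>z. \<forall>c\<in>S. qscale A U z c \<in> S) \<and>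
     (\<forall>c\<in>Q A U. \<forall>d\<in>S. qmul A U c d \<in> S \<and> qmul A U d c \<in> S) \<and> qclosed A U S"

definition q_essential_ideal :: "('h::chilbert_space \<Rightarrow> 'h) set \<Rightarrow> 'i filter \<Rightarrow> ('i \<Rightarrow> 'h \<Rightarrow> 'h) set set \<Rightarrow> bool" where
  "q_essential_ideal A U S \<longleftrightarrow> q_ideal A U S \<and>
     (\<forall>S'. q_ideal A U S' \<and> S' \<noteq> {qzero A U} \<longrightarrow> S \<inter> S' \<noteq> {qzero A U})"

definition qhom :: "('h::chilbert_space \<Rightarrow> 'h) set \<Rightarrow> 'i filter \<Rightarrow> ('b::cstar_algebra \<Rightarrow> ('i \<Rightarrow> 'h \<Rightarrow> 'h) set) \<Rightarrow> bool" where
  "qhom A U \<phi> \<longleftrightarrow> (\<forall>b. \<phi> b \<in> Q A U) \<and>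
     (\<forall>x y. \<phi> (x + y) = qadd A U (\<phi> x) (\<phi> y) \<and> \<phi> (x * y) = qmul A U (\<phi> x) (\<phi> y)) \<and>
     (\<forall>z x. \<phi> (scaleC z x) = qscale A U z (\<phi> x)) \<and>
     (\<forall>x. \<phi> (cstar x) = qstar A U (\<phi> x))"

text \<open>B contains A as an ideal: an injective *-homomorphism of A into B whose image is a two-sided ideal.\<close>
definition ideal_embedding :: "('h::chilbert_space \<Rightarrow> 'h) set \<Rightarrow> (('h \<Rightarrow> 'h) \<Rightarrow> 'b::cstar_algebra) \<Rightarrow> bool" where
  "ideal_embedding A \<iota> \<longleftrightarrow> inj_on \<iota> A \<and>
     (\<forall>a\<in>A. \<forall>b\<in>A. \<iota> (\<lambda>x. a x + b x) = \<iota> a + \<iota> b \<and> \<iota> (a \<circ> b) = \<iota> a * \<iota> b) \<and>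
     (\<forall>z. \<forall>a\<in>A. \<iota> (\<lambda>x. scaleC z (a x)) = scaleC z (\<iota> a)) \<and>
     (\<forall>a\<in>A. \<iota> (adj a) = cstar (\<iota> a)) \<and>
     (\<forall>y. \<forall>a\<in>A. y * \<iota> a \<in> \<iota> ` A \<and> \<iota> a * y \<in> \<iota> ` A)"

end

theory Submission
  imports Defs
begin

lemma scaleC_zero_left [simp]: "scaleC 0 (x::'a::complex_vector) = 0"
proof -
  have "scaleC 0 x = scaleC 0 x + scaleC 0 x" by (metis add_0 scaleC_add_left)
  then show ?thesis by simp
qed

lemma scaleC_zero_right [simp]: "scaleC a (0::'a::complex_vector) = 0"
proof -
  have "scaleC a (0::'a) = scaleC a 0 + scaleC a 0" by (metis add_0 scaleC_add_right)
  then show ?thesis by simp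
qed

lemma scaleC_minus_right: "scaleC a (- x::'a::complex_vector) = - scaleC a x"
proof -
  have "scaleC a (-x) + scaleC a x = scaleC a (-x + x)" by (simp only: scaleC_add_right)
  then have "scaleC a (-x) + scaleC a x = 0" by simp
  then show ?thesis by (simp only: eq_neg_iff_add_eq_0)
qed

lemma scaleC_diff_right: "scaleC a (x - y::'a::complex_vector) = scaleC a x - scaleC a y"
  by (simp only: diff_conv_add_uminus scaleC_add_right scaleC_minus_right)

lemma scaleC_minus_left: "scaleC (- a) (x::'a::complex_vector) = - scaleC a x"
proof -
  have "scaleC (-a) x + scaleC a x = scaleC (-a + a) x" by (simp only: scaleC_add_left)
  then have "scaleC (-a) x + scaleC a x = 0" by simp
  then show ?thesis by (simp only: eq_neg_iff_add_eq_0)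
qed

lemma scaleC_diff_left: "scaleC (a - b) (x::'a::complex_vector) = scaleC a x - scaleC b x"
  by (simp only: diff_conv_add_uminus scaleC_add_left scaleC_minus_left)

lemma scaleC_of_real: "scaleC (complex_of_real r) (x::'a::complex_vector) = scaleR r x"
  by (simp add: scaleR_scaleC)

lemma cinner_zero_left [simp]: "cinner 0 (y::'a::complex_inner) = 0"
proof -
  have "cinner (0::'a) y = cinner 0 y + cinner 0 y" by (metis add_0 cinner_add_left)
  then show ?thesis by simp
qed

lemma cinner_add_right: "cinner (x::'a::complex_inner) (y + z) = cinner x y + cinner x z"
  by (simp only: cinner_commute[of x] cinner_add_left complex_cnj_add)

lemma cinner_scaleC_right: "cinner (x::'a::complex_inner) (scaleC c y) = c * cinner x y"
  by (simp only: cinner_commute[of x] cinner_scaleC_left complex_cnj_cnj complex_cnj_mult)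

lemma cinner_zero_right [simp]: "cinner (x::'a::complex_inner) 0 = 0"
  by (simp only: cinner_commute[of x] cinner_zero_left complex_cnj_zero)

lemma cinner_minus_left: "cinner (- x::'a::complex_inner) y = - cinner x y"
proof -
  have "cinner (- x) y + cinner x y = cinner (-x + x) y" by (simp only: cinner_add_left)
  then have "cinner (- x) y + cinner x y = 0" by simp
  then show ?thesis by (simp only: eq_neg_iff_add_eq_0)
qed

lemma cinner_diff_left: "cinner (x - y::'a::complex_inner) z = cinner x z - cinner y z"
  by (simp only: cinner_add_left cinner_minus_left diff_conv_add_uminus)

lemma cinner_minus_right: "cinner (x::'a::complex_inner) (- y) = - cinner x y"
  by (simp only: cinner_commute[of x] cinner_minus_left complex_cnj_minus)

lemma cinner_diff_right: "cinner (x::'a::complex_inner) (y - z) = cinner x y - cinner x z"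
  by (simp only: cinner_add_right cinner_minus_right diff_conv_add_uminus)

lemma cinner_self_zero: "cinner (x::'a::complex_inner) x = 0 \<longleftrightarrow> x = 0"
  by (simp add: cinner_norm)

lemma cinner_ext_right: "(\<And>y. cinner y (a::'a::complex_inner) = cinner y b) \<Longrightarrow> a = b"
proof -
  assume h: "\<And>y. cinner y a = cinner y b"
  have "cinner (a - b) (a - b) = 0" by (simp only: cinner_diff_right h) simp
  then show ?thesis by (simp only: cinner_self_zero right_minus_eq)
qed

lemma norm_sq_diff_scale:
  fixes w m :: "'a::complex_inner"
  assumes "m \<noteq> 0"
  defines "t \<equiv> cinner m w / complex_of_real ((norm m)\<^sup>2)"
  shows "(norm (w - scaleC t m))\<^sup>2 = (norm w)\<^sup>2 - (cmod (cinner m w))\<^sup>2 / (norm m)\<^sup>2"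
proof -
  define \<alpha> where "\<alpha> = cinner m w"
  define N where "N = (norm m)\<^sup>2"
  have N: "N > 0" using assms by (simp add: N_def)
  have wm: "cinner w m = cnj \<alpha>" by (simp add: \<alpha>_def cinner_commute[of w m])
  have "complex_of_real ((norm (w - scaleC t m))\<^sup>2) = cinner (w - scaleC t m) (w - scaleC t m)"
    by (simp add: cinner_norm)
  also have "\<dots> = cinner w w - t * cinner w m - cnj t * cinner m w + cnj t * t * cinner m m"
    by (simp add: cinner_diff_left cinner_diff_right cinner_scaleC_left cinner_scaleC_right algebra_simps)
  also have "\<dots> = of_real ((norm w)\<^sup>2) - t * cnj \<alpha> - cnj t * \<alpha> + cnj t * t * of_real N"
    by (simp add: wm \<alpha>_def N_def cinner_norm)
  also have "\<dots> = of_real ((norm w)\<^sup>2) - \<alpha> * cnj \<alpha> / of_real N"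
    using N by (simp add: t_def \<alpha>_def[symmetric] N_def[symmetric] field_simps)
  also have "\<alpha> * cnj \<alpha> = of_real ((cmod \<alpha>)\<^sup>2)"
    by (rule complex_norm_square[symmetric])
  also have "of_real ((norm w)\<^sup>2) - of_real ((cmod \<alpha>)\<^sup>2) / of_real N = (of_real ((norm w)\<^sup>2 - (cmod \<alpha>)\<^sup>2 / N) :: complex)"
    by simp
  finally show ?thesis unfolding \<alpha>_def N_def by (metis of_real_eq_iff)
qed

lemma cauchy_schwarz_c: "cmod (cinner (x::'a::complex_inner) y) \<le> norm x * norm y"
proof (cases "x = 0")
  case True then show ?thesis by simp
next
  case False
  from norm_sq_diff_scale[OF False, of y]
  have "0 \<le> (norm y)\<^sup>2 - (cmod (cinner x y))\<^sup>2 / (norm x)\<^sup>2" by (metis zero_le_power2)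
  then have "(cmod (cinner x y))\<^sup>2 \<le> (norm y)\<^sup>2 * (norm x)\<^sup>2"
    using False by (simp add: field_simps)
  then have "(cmod (cinner x y))\<^sup>2 \<le> (norm x * norm y)\<^sup>2" by (simp add: power_mult_distrib mult.commute)
  then show ?thesis by (rule power2_le_imp_le) simp
qed

lemma norm_sq_add: "(norm (x + y::'a::complex_inner))\<^sup>2 = (norm x)\<^sup>2 + (norm y)\<^sup>2 + 2 * Re (cinner x y)"
proof -
  have "complex_of_real ((norm (x+y))\<^sup>2) = cinner (x+y) (x+y)"
    by (simp only: cinner_norm)
  also have "\<dots> = cinner x x + cinner y y + (cinner x y + cinner y x)"
    by (simp add: cinner_add_left cinner_add_right)
  also have "cinner x y + cinner y x = of_real (2 * Re (cinner x y))"
    by (metis cinner_commute complex_add_cnj)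
  finally have "complex_of_real ((norm (x+y))\<^sup>2) = of_real ((norm x)\<^sup>2 + (norm y)\<^sup>2 + 2 * Re (cinner x y))"
    by (simp add: cinner_norm)
  then show ?thesis by (metis of_real_eq_iff)
qed

lemma parallelogram: "(norm (x + y::'a::complex_inner))\<^sup>2 + (norm (x - y))\<^sup>2 = 2 * (norm x)\<^sup>2 + 2 * (norm y)\<^sup>2"
proof -
  have "(norm (x - y))\<^sup>2 = (norm x)\<^sup>2 + (norm y)\<^sup>2 + 2 * Re (cinner x (-y))"
    using norm_sq_add[of x "-y"] by simp
  then show ?thesis by (simp add: norm_sq_add cinner_minus_right)
qed


lemma scaleC_bounded_linear: "bounded_linear (\<lambda>x::'a::complex_normed_vector. scaleC c x)"
proof (rule bounded_linear_intro[where K="cmod c"])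
  show "scaleC c (x + y) = scaleC c x + scaleC c y" for x y :: 'a by (rule scaleC_add_right)
  show "scaleC c (r *\<^sub>R x) = r *\<^sub>R scaleC c x" for r and x :: 'a
    by (simp add: scaleR_scaleC scaleC_scaleC mult.commute)
  show "norm (scaleC c x) \<le> norm x * cmod c" for x :: 'a
    by (simp add: norm_scaleC mult.commute)
qed

lemma bopD: assumes "bop T" shows "bounded_linear T" "T (scaleC c x) = scaleC c (T x)"
  using assms by (auto simp: bop_def)

lemma bop_add_apply: "bop T \<Longrightarrow> T (x + y) = T x + T y"
  by (simp add: bop_def linear_add bounded_linear.linear)

lemma bop_diff_apply: "bop T \<Longrightarrow> T (x - y) = T x - T y"
  by (simp add: bop_def linear_diff bounded_linear.linear)

lemma bop_zero_apply: "bop T \<Longrightarrow> T 0 = 0"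
  by (simp add: bop_def linear_0 bounded_linear.linear)

lemma bop_minus_apply: "bop T \<Longrightarrow> T (- x) = - T x"
  by (simp add: bop_def linear_neg bounded_linear.linear)

lemma bop_scaleR_apply: "bop T \<Longrightarrow> T (r *\<^sub>R x) = r *\<^sub>R T x"
  by (simp add: bop_def linear_scale bounded_linear.linear)

lemma bop_norm: "bop T \<Longrightarrow> norm (T x) \<le> onorm T * norm x"
  by (simp add: bop_def onorm)

lemma bop_onorm_nonneg: "bop T \<Longrightarrow> 0 \<le> onorm T"
  by (simp add: bop_def onorm_pos_le)

lemma bop_comp: "bop S \<Longrightarrow> bop T \<Longrightarrow> bop (S \<circ> T)"
  unfolding bop_def comp_def by (auto intro: bounded_linear_compose)

lemma bop_comp': "bop S \<Longrightarrow> bop T \<Longrightarrow> bop (\<lambda>x. S (T x))"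
  using bop_comp[of S T] by (simp add: comp_def)

lemma bop_add: "bop S \<Longrightarrow> bop T \<Longrightarrow> bop (\<lambda>x. S x + T x)"
  by (simp add: bop_def bounded_linear_add scaleC_add_right)

lemma bop_diff: "bop S \<Longrightarrow> bop T \<Longrightarrow> bop (\<lambda>x. S x - T x)"
  by (simp add: bop_def bounded_linear_sub scaleC_diff_right)

lemma bop_zero: "bop (\<lambda>x. 0)"
  by (simp add: bop_def bounded_linear_zero)

lemma bop_scale: "bop T \<Longrightarrow> bop (\<lambda>x. scaleC c (T x))"
  unfolding bop_def
  using bounded_linear_compose[OF scaleC_bounded_linear[of c], of T]
  by (auto simp: comp_def scaleC_scaleC mult.commute)

lemma onorm_scaleC_le: assumes "bop T" shows "onorm (\<lambda>x. scaleC c (T x)) \<le> cmod c * onorm T"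
proof (rule onorm_bound)
  show "0 \<le> cmod c * onorm T" using bop_onorm_nonneg[OF assms] by simp
  show "norm (scaleC c (T x)) \<le> cmod c * onorm T * norm x" for x
    using mult_left_mono[OF bop_norm[OF assms, of x], of "cmod c"] by (simp add: norm_scaleC mult.assoc)
qed

lemma onorm_comp_le: "bop S \<Longrightarrow> bop T \<Longrightarrow> onorm (\<lambda>x. S (T x)) \<le> onorm S * onorm T"
  using onorm_compose[of S T] by (simp add: bop_def comp_def)

lemma onorm_add_le: "bop S \<Longrightarrow> bop T \<Longrightarrow> onorm (\<lambda>x. S x + T x) \<le> onorm S + onorm T"
  by (simp add: bop_def onorm_triangle)

lemma onorm_diff_sym: "onorm (\<lambda>x. S x - T x) = onorm (\<lambda>x. T x - S x)"
  using onorm_neg[of "\<lambda>x. S x - T x"] by simp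

lemma onorm_diff_tri: "bop R \<Longrightarrow> bop S \<Longrightarrow> bop T \<Longrightarrow>
   onorm (\<lambda>x. R x - T x) \<le> onorm (\<lambda>x. R x - S x) + onorm (\<lambda>x. S x - T x)"
  using onorm_add_le[OF bop_diff[of R S] bop_diff[of S T]] by simp

lemma onorm_eq_zero_iff: "bop T \<Longrightarrow> onorm T = 0 \<longleftrightarrow> T = (\<lambda>x. 0)"
  by (simp add: bop_def onorm_eq_0 fun_eq_iff)

lemma riesz:
  fixes f :: "'a::chilbert_space \<Rightarrow> complex"
  assumes add: "\<And>x y. f (x + y) = f x + f y"
    and sc: "\<And>c x. f (scaleC c x) = c * f x"
    and bd: "\<And>x. cmod (f x) \<le> K * norm x"
  shows "\<exists>z. \<forall>x. f x = cinner z x"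
proof (cases "\<forall>x. f x = 0")
  case True
  then show ?thesis by (intro exI[of _ 0]) simp
next
  case False
  have neg: "f (- x) = - f x" for x
    using sc[of "-1" x] by (simp add: scaleC_minus_left scaleC_one)
  have diff: "f (x - y) = f x - f y" for x y
    using add[of x "-y"] by (simp add: neg)
  have f0: "f 0 = 0" using diff[of 0 0] by simp
  have scR: "f (r *\<^sub>R x) = complex_of_real r * f x" for r x
    by (simp add: scaleR_scaleC sc)
  have cont: "(\<lambda>n. f (X n)) \<longlonglongrightarrow> f p" if "X \<longlonglongrightarrow> p" for X p
  proof -
    have "(\<lambda>n. norm (X n - p)) \<longlonglongrightarrow> 0" using that by (simp add: LIM_zero tendsto_norm_zero)
    then have "(\<lambda>n. K * norm (X n - p)) \<longlonglongrightarrow> 0" by (simp add: tendsto_mult_right_zero)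
    then have "(\<lambda>n. f (X n) - f p) \<longlonglongrightarrow> 0"
      by (rule Lim_null_comparison[rotated]) (simp add: diff[symmetric] bd)
    then show ?thesis by (simp add: LIM_zero_iff)
  qed
  from False obtain u0 where u0: "f u0 \<noteq> 0" by blast
  define u where "u = scaleC (1 / f u0) u0"
  have fu: "f u = 1" using u0 by (simp add: u_def sc)
  define M where "M = {x. f x = 0}"
  have M0: "0 \<in> M" by (simp add: M_def f0)
  define D where "D = {(norm (u - m))\<^sup>2 |m. m \<in> M}"
  define d where "d = Inf D"
  have Dne: "D \<noteq> {}" using M0 by (auto simp: D_def)
  have Dbdd: "bdd_below D" by (auto simp: D_def bdd_below_def intro!: exI[of _ 0])
  have dle: "d \<le> (norm (u - m))\<^sup>2" if "m \<in> M" for m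
    unfolding d_def by (rule cInf_lower) (use that Dbdd in \<open>auto simp: D_def\<close>)
  have "\<exists>m. m \<in> M \<and> (norm (u - m))\<^sup>2 < d + 1 / (Suc n)" for n
  proof -
    have "d < d + 1 / Suc n" by simp
    from cInf_lessD[OF Dne this[unfolded d_def]] show ?thesis by (auto simp: D_def d_def)
  qed
  then obtain ms where ms: "\<And>n. ms n \<in> M" "\<And>n. (norm (u - ms n))\<^sup>2 < d + 1 / Suc n"
    by metis
  have midM: "scaleR (1/2) (a + b) \<in> M" if "a \<in> M" "b \<in> M" for a b
    using that by (simp add: M_def scR add)
  have close: "(norm (ms n - ms k))\<^sup>2 < 2 / Suc n + 2 / Suc k" for n k
  proof -
    have par: "(norm ((u - ms n) + (u - ms k)))\<^sup>2 + (norm ((u - ms n) - (u - ms k)))\<^sup>2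
        = 2 * (norm (u - ms n))\<^sup>2 + 2 * (norm (u - ms k))\<^sup>2" by (rule parallelogram)
    have eq1: "(u - ms n) + (u - ms k) = 2 *\<^sub>R (u - scaleR (1/2) (ms n + ms k))"
      by (simp add: algebra_simps scaleR_2)
    have "4 * d \<le> 4 * (norm (u - scaleR (1/2) (ms n + ms k)))\<^sup>2"
      using dle[OF midM[OF ms(1) ms(1)]] by simp
    also have "\<dots> = (norm ((u - ms n) + (u - ms k)))\<^sup>2"
      unfolding eq1 by (simp add: power_mult_distrib)
    finally have "4 * d \<le> (norm ((u - ms n) + (u - ms k)))\<^sup>2" .
    moreover have "(u - ms n) - (u - ms k) = ms k - ms n" by simp
    ultimately have "(norm (ms k - ms n))\<^sup>2 \<le> 2 * (norm (u - ms n))\<^sup>2 + 2 * (norm (u - ms k))\<^sup>2 - 4 * d"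
      using par by simp
    also have "\<dots> < 2 / Suc n + 2 / Suc k" using ms(2)[of n] ms(2)[of k] by simp
    finally show ?thesis by (simp add: norm_minus_commute)
  qed
  have "Cauchy ms"
  proof (rule metric_CauchyI)
    fix e :: real assume e: "e > 0"
    obtain N :: nat where N: "4 / e\<^sup>2 < N" using reals_Archimedean2 by blast
    have "4 / Suc N < e\<^sup>2"
    proof -
      have "4 < e\<^sup>2 * N" using N e by (simp add: field_simps)
      also have "\<dots> \<le> e\<^sup>2 * Suc N" by (intro mult_left_mono) auto
      finally show ?thesis by (simp add: field_simps)
    qed
    show "\<exists>M. \<forall>m\<ge>M. \<forall>n\<ge>M. dist (ms m) (ms n) < e"
    proof (intro exI allI impI)
      fix m n assume mn: "m \<ge> N" "n \<ge> N"
      have "2 / Suc m \<le> 2 / Suc N" "2 / Suc n \<le> 2 / Suc N" using mn by (auto simp: frac_le)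
      then have "(norm (ms m - ms n))\<^sup>2 < e\<^sup>2" using close[of m n] \<open>4 / Suc N < e\<^sup>2\<close> by simp
      then have "norm (ms m - ms n) < e" using e by (simp add: power_less_imp_less_base)
      then show "dist (ms m) (ms n) < e" by (simp add: dist_norm)
    qed
  qed
  then obtain p where p: "ms \<longlonglongrightarrow> p" using Cauchy_convergent_iff convergent_def by blast
  have pM: "p \<in> M"
  proof -
    have "(\<lambda>n. f (ms n)) \<longlonglongrightarrow> f p" by (rule cont[OF p])
    moreover have "(\<lambda>n. f (ms n)) = (\<lambda>n. 0)" using ms(1) by (auto simp: M_def)
    ultimately show ?thesis by (simp add: M_def LIMSEQ_const_iff)
  qed
  define w where "w = u - p"
  have fw: "f w = 1" using pM fu by (simp add: w_def diff M_def)
  have w0: "w \<noteq> 0" using fw f0 by auto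
  have wd: "(norm w)\<^sup>2 \<le> d"
  proof -
    have "(\<lambda>n. (norm (u - ms n))\<^sup>2) \<longlonglongrightarrow> (norm (u - p))\<^sup>2"
      by (intro tendsto_intros p)
    moreover have "(\<lambda>n. d + 1 / Suc n) \<longlonglongrightarrow> d + 0"
      by (intro tendsto_intros LIMSEQ_Suc[OF lim_const_over_n])
    ultimately have "(norm (u - p))\<^sup>2 \<le> d + 0"
      by (rule LIMSEQ_le) (use ms(2) in \<open>auto intro: less_imp_le\<close>)
    then show ?thesis by (simp add: w_def)
  qed
  have orth: "cinner m w = 0" if "m \<in> M" for m
  proof (cases "m = 0")
    case True then show ?thesis by simp
  next
    case False
    define t where "t = cinner m w / complex_of_real ((norm m)\<^sup>2)"
    have "p + scaleC t m \<in> M" using pM that by (simp add: M_def add sc)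
    then have "d \<le> (norm (u - (p + scaleC t m)))\<^sup>2" by (rule dle)
    also have "u - (p + scaleC t m) = w - scaleC t m" by (simp add: w_def)
    also have "(norm (w - scaleC t m))\<^sup>2 = (norm w)\<^sup>2 - (cmod (cinner m w))\<^sup>2 / (norm m)\<^sup>2"
      unfolding t_def by (rule norm_sq_diff_scale[OF False])
    finally have "(cmod (cinner m w))\<^sup>2 / (norm m)\<^sup>2 \<le> 0" using wd by simp
    then have "(cmod (cinner m w))\<^sup>2 \<le> 0" using False by (simp add: divide_le_0_iff)
    then show ?thesis by simp
  qed
  have key: "cinner w x = f x * complex_of_real ((norm w)\<^sup>2)" for x
  proof -
    have "x - scaleC (f x) w \<in> M" by (simp add: M_def diff sc fw)
    then have "cinner (x - scaleC (f x) w) w = 0" by (rule orth)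
    then have "cinner w (x - scaleC (f x) w) = 0" by (metis cinner_commute complex_cnj_zero)
    then show ?thesis by (simp add: cinner_diff_right cinner_scaleC_right cinner_norm)
  qed
  show ?thesis
  proof (intro exI allI)
    fix x
    have "cinner (scaleC (complex_of_real (1 / (norm w)\<^sup>2)) w) x = complex_of_real (1 / (norm w)\<^sup>2) * cinner w x"
      by (simp add: cinner_scaleC_left)
    also have "\<dots> = f x" using w0 by (simp add: key)
    finally show "f x = cinner (scaleC (complex_of_real (1 / (norm w)\<^sup>2)) w) x" by simp
  qed
qed

lemma adj_exists:
  fixes T :: "'h::chilbert_space \<Rightarrow> 'h"
  assumes "bop T"
  shows "\<exists>S. \<forall>x y. cinner (T x) y = cinner x (S y)"
proof -
  have "\<forall>y. \<exists>z. \<forall>x. cinner y (T x) = cinner z x"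
  proof
    fix y
    show "\<exists>z. \<forall>x. cinner y (T x) = cinner z x"
    proof (rule riesz[where K="norm y * onorm T"])
      show "cinner y (T (x1 + x2)) = cinner y (T x1) + cinner y (T x2)" for x1 x2
        using assms by (simp add: bop_add_apply cinner_add_right)
      show "cinner y (T (scaleC c x)) = c * cinner y (T x)" for c x
        using assms by (simp add: bopD cinner_scaleC_right)
      show "cmod (cinner y (T x)) \<le> norm y * onorm T * norm x" for x
      proof -
        have "cmod (cinner y (T x)) \<le> norm y * norm (T x)" by (rule cauchy_schwarz_c)
        also have "\<dots> \<le> norm y * (onorm T * norm x)"
          by (rule mult_left_mono[OF bop_norm[OF assms]]) simp
        finally show ?thesis by (simp add: mult.assoc)
      qed
    qed
  qed
  then have "\<exists>S. \<forall>y. \<forall>x. cinner y (T x) = cinner (S y) x" by (rule choice)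
  then obtain S where S: "\<And>y x. cinner y (T x) = cinner (S y) x" by blast
  show ?thesis
  proof (intro exI allI)
    fix x y
    have "cinner (T x) y = cnj (cinner y (T x))" by (rule cinner_commute)
    also have "\<dots> = cnj (cinner (S y) x)" by (simp only: S)
    also have "\<dots> = cinner x (S y)" by (simp only: cinner_commute[of x "S y"] complex_cnj_cnj)
    finally show "cinner (T x) y = cinner x (S y)" .
  qed
qed

lemma adj_prop:
  assumes "bop T"
  shows "cinner (T x) y = cinner x (adj T y)"
proof -
  have "\<exists>!S. \<forall>x y. cinner (T x) y = cinner x (S y)"
  proof (rule ex_ex1I)
    show "\<exists>S. \<forall>x y. cinner (T x) y = cinner x (S y)" by (rule adj_exists[OF assms])
  next
    fix S S' assume h: "\<forall>x y. cinner (T x) y = cinner x (S y)" "\<forall>x y. cinner (T x) y = cinner x (S' y)"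
    show "S = S'"
    proof
      fix y show "S y = S' y" by (rule cinner_ext_right) (simp only: h[rule_format, symmetric])
    qed
  qed
  then have "\<forall>x y. cinner (T x) y = cinner x (adj T y)"
    unfolding adj_def by (rule theI')
  then show ?thesis by blast
qed

lemma adj_eqI:
  assumes "bop T" "\<And>x y. cinner (T x) y = cinner x (S y)"
  shows "adj T = S"
proof (rule ext, rule cinner_ext_right)
  fix y x
  show "cinner x (adj T y) = cinner x (S y)" by (simp only: adj_prop[OF assms(1), symmetric] assms(2))
qed

lemma adj_prop2:
  assumes "bop T"
  shows "cinner (adj T y) x = cinner y (T x)"
proof -
  have "cinner (adj T y) x = cnj (cinner x (adj T y))" by (rule cinner_commute)
  also have "\<dots> = cnj (cinner (T x) y)" by (simp only: adj_prop[OF assms])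
  also have "\<dots> = cinner y (T x)" by (simp only: cinner_commute[of y "T x"] complex_cnj_cnj)
  finally show ?thesis .
qed

lemma adj_bop_bound:
  assumes T: "bop T"
  shows "bop (adj T)" "onorm (adj T) \<le> onorm T"
proof -
  have addA: "adj T (y + z) = adj T y + adj T z" for y z
    by (rule cinner_ext_right) (simp only: adj_prop[OF T, symmetric] cinner_add_right)
  have scA: "adj T (scaleC c y) = scaleC c (adj T y)" for c y
    by (rule cinner_ext_right) (simp only: adj_prop[OF T, symmetric] cinner_scaleC_right)
  have nb: "norm (adj T y) \<le> onorm T * norm y" for y
  proof (cases "adj T y = 0")
    case True then show ?thesis by (simp add: bop_onorm_nonneg[OF T])
  next
    case False
    have "complex_of_real ((norm (adj T y))\<^sup>2) = cinner (adj T y) (adj T y)" by (simp only: cinner_norm)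
    also have "\<dots> = cinner (T (adj T y)) y" by (simp only: adj_prop[OF T])
    finally have e: "complex_of_real ((norm (adj T y))\<^sup>2) = cinner (T (adj T y)) y" .
    have "(norm (adj T y))\<^sup>2 = cmod (complex_of_real ((norm (adj T y))\<^sup>2))" by (simp add: norm_power)
    also have "\<dots> = cmod (cinner (T (adj T y)) y)" by (simp only: e)
    also have "\<dots> \<le> norm (T (adj T y)) * norm y" by (rule cauchy_schwarz_c)
    also have "\<dots> \<le> onorm T * norm (adj T y) * norm y"
      by (intro mult_right_mono bop_norm[OF T]) simp
    finally have "norm (adj T y) * norm (adj T y) \<le> (onorm T * norm y) * norm (adj T y)"
      by (simp add: power2_eq_square algebra_simps)
    then show ?thesis using False by simp
  qed
  show bA: "bop (adj T)"
    unfolding bop_def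
  proof (intro conjI allI bounded_linear_intro[where K="onorm T"])
    show "adj T (x + y) = adj T x + adj T y" for x y by (rule addA)
    show "adj T (r *\<^sub>R x) = r *\<^sub>R adj T x" for r x by (simp only: scaleR_scaleC scA)
    show "norm (adj T x) \<le> norm x * onorm T" for x using nb[of x] by (simp add: mult.commute)
    show "adj T (scaleC c x) = scaleC c (adj T x)" for c x by (rule scA)
  qed
  show "onorm (adj T) \<le> onorm T"
    by (rule onorm_bound[OF bop_onorm_nonneg[OF T] nb])
qed

lemma adj_bop: "bop T \<Longrightarrow> bop (adj T)"
  by (rule adj_bop_bound(1))

lemma adj_adj: assumes "bop T" shows "adj (adj T) = T"
  by (rule adj_eqI[OF adj_bop[OF assms]]) (simp only: adj_prop2[OF assms])

lemma onorm_adj: assumes "bop T" shows "onorm (adj T) = onorm T"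
proof (rule order_antisym)
  show "onorm (adj T) \<le> onorm T" by (rule adj_bop_bound(2)[OF assms])
  have "onorm (adj (adj T)) \<le> onorm (adj T)" by (rule adj_bop_bound(2)[OF adj_bop[OF assms]])
  then show "onorm T \<le> onorm (adj T)" by (simp only: adj_adj[OF assms])
qed

lemma adj_comp: assumes "bop S" "bop T" shows "adj (\<lambda>x. S (T x)) = (\<lambda>x. adj T (adj S x))"
  by (rule adj_eqI[OF bop_comp'[OF assms]]) (simp only: adj_prop[OF assms(1)] adj_prop[OF assms(2)])

lemma adj_comp': assumes "bop S" "bop T" shows "adj (S \<circ> T) = adj T \<circ> adj S"
  using adj_comp[OF assms] by (simp add: comp_def)

lemma adj_add: assumes "bop S" "bop T" shows "adj (\<lambda>x. S x + T x) = (\<lambda>x. adj S x + adj T x)"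
  by (rule adj_eqI[OF bop_add[OF assms]])
     (simp only: adj_prop[OF assms(1)] adj_prop[OF assms(2)] cinner_add_left cinner_add_right)

lemma adj_diff: assumes "bop S" "bop T" shows "adj (\<lambda>x. S x - T x) = (\<lambda>x. adj S x - adj T x)"
  by (rule adj_eqI[OF bop_diff[OF assms]])
     (simp only: adj_prop[OF assms(1)] adj_prop[OF assms(2)] cinner_diff_left cinner_diff_right)

lemma adj_scale: assumes "bop T" shows "adj (\<lambda>x. scaleC c (T x)) = (\<lambda>x. scaleC (cnj c) (adj T x))"
  by (rule adj_eqI[OF bop_scale[OF assms]])
     (simp only: adj_prop[OF assms] cinner_scaleC_left cinner_scaleC_right complex_cnj_cnj)

lemma adj_zero: "adj (\<lambda>x::'h::chilbert_space. 0) = (\<lambda>x. 0)"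
  by (rule adj_eqI[OF bop_zero]) simp


lemma ultra_lim:
  fixes f :: "'i \<Rightarrow> real"
  assumes uf: "ultrafilter U" and bd: "\<And>i. \<bar>f i\<bar> \<le> B"
  shows "\<exists>l. (f \<longlongrightarrow> l) U"
proof -
  have ne: "U \<noteq> bot" using uf by (simp add: ultrafilter_def)
  have ult: "eventually P U \<or> eventually (\<lambda>x. \<not> P x) U" for P using uf by (simp add: ultrafilter_def)
  define Y where "Y = {y. eventually (\<lambda>i. y \<le> f i) U}"
  have mB: "-B \<le> f i" for i using bd[of i] by (simp add: abs_le_iff)
  have Yne: "-B \<in> Y" by (simp add: Y_def mB)
  have Ybd: "y \<le> B" if "y \<in> Y" for y
  proof -
    have "eventually (\<lambda>i. y \<le> f i) U" using that by (simp add: Y_def)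
    then have "eventually (\<lambda>i. y \<le> B) U"
      by (rule eventually_mono) (use bd in \<open>auto simp: abs_le_iff intro: order_trans\<close>)
    then show ?thesis using ne by (simp add: eventually_const_iff)
  qed
  define l where "l = Sup Y"
  have bddY: "bdd_above Y" using Ybd by (auto simp: bdd_above_def)
  show ?thesis
  proof (intro exI tendstoI)
    fix e :: real assume e: "e > 0"
    have lo: "eventually (\<lambda>i. l - e < f i) U"
    proof -
      have "l - e < Sup Y" using e by (simp add: l_def)
      then obtain y where "y \<in> Y" "l - e < y" using less_cSupD[OF _ ] Yne by (metis empty_iff)
      then show ?thesis unfolding Y_def by (auto elim!: eventually_mono)
    qed
    have hi: "eventually (\<lambda>i. f i < l + e) U"
    proof -
      have "\<not> eventually (\<lambda>i. l + e \<le> f i) U"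
      proof
        assume "eventually (\<lambda>i. l + e \<le> f i) U"
        then have "l + e \<in> Y" by (simp add: Y_def)
        then have "l + e \<le> l" unfolding l_def by (rule cSup_upper[OF _ bddY])
        then show False using e by simp
      qed
      then have "eventually (\<lambda>i. \<not> l + e \<le> f i) U" using ult by blast
      then show ?thesis by (rule eventually_mono) simp
    qed
    show "eventually (\<lambda>i. dist (f i) l < e) U"
      using eventually_conj[OF lo hi] by (rule eventually_mono) (auto simp: dist_real_def abs_less_iff)
  qed
qed

locale ms =
  fixes A :: "('h::chilbert_space \<Rightarrow> 'h) set"
    and le :: "'i \<Rightarrow> 'i \<Rightarrow> bool"
    and e :: "'i \<Rightarrow> 'h \<Rightarrow> 'h"
    and U :: "'i filter"
  assumes csa: "cstar_subalg A"
    and nd: "nondegenerate A"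
    and dir: "directed le"
    and au: "approx_unit A le e"
    and ebd: "\<exists>C. \<forall>i. onorm (e i) \<le> C"
    and uf: "ultrafilter U"
    and cof: "cofinal le U"
begin

lemma A_bop: "a \<in> A \<Longrightarrow> bop a"
  using csa by (auto simp: cstar_subalg_def)

lemma A_zero: "(\<lambda>x. 0) \<in> A"
  using csa by (auto simp: cstar_subalg_def)

lemma A_add: "a \<in> A \<Longrightarrow> b \<in> A \<Longrightarrow> (\<lambda>x. a x + b x) \<in> A"
  using csa by (auto simp: cstar_subalg_def)

lemma A_comp: "a \<in> A \<Longrightarrow> b \<in> A \<Longrightarrow> (\<lambda>x. a (b x)) \<in> A"
  using csa unfolding cstar_subalg_def comp_def by blast

lemma A_scale: "a \<in> A \<Longrightarrow> (\<lambda>x. scaleC c (a x)) \<in> A"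
  using csa by (auto simp: cstar_subalg_def)

lemma A_adj: "a \<in> A \<Longrightarrow> adj a \<in> A"
  using csa by (auto simp: cstar_subalg_def)

lemma A_closed: "bop T \<Longrightarrow> (\<And>\<epsilon>. \<epsilon> > 0 \<Longrightarrow> \<exists>S\<in>A. onorm (\<lambda>x. T x - S x) < \<epsilon>) \<Longrightarrow> T \<in> A"
  using csa unfolding cstar_subalg_def by blast

lemma A_diff: "a \<in> A \<Longrightarrow> b \<in> A \<Longrightarrow> (\<lambda>x. a x - b x) \<in> A"
proof -
  assume a: "a \<in> A" and b: "b \<in> A"
  have "(\<lambda>x. a x + scaleC (-1) (b x)) \<in> A" by (intro A_add a A_scale b)
  moreover have "(\<lambda>x. a x + scaleC (-1) (b x)) = (\<lambda>x. a x - b x)"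
    by (simp add: scaleC_minus_left scaleC_one)
  ultimately show ?thesis by simp
qed

lemma A_scaleR: "a \<in> A \<Longrightarrow> (\<lambda>x. r *\<^sub>R a x) \<in> A"
  using A_scale[of a "complex_of_real r"] by (simp add: scaleC_of_real)

lemma U_ne: "U \<noteq> bot"
  using uf by (simp add: ultrafilter_def)

lemma U_net: "U \<le> net_filter le"
  unfolding net_filter_def
proof (rule INF_greatest)
  fix i0 show "U \<le> principal {i. le i0 i}"
    using cof by (simp add: cofinal_def le_principal)
qed

lemma au_U:
  assumes "a \<in> A"
  shows "((\<lambda>i. onorm (\<lambda>x. e i (a x) - a x)) \<longlongrightarrow> 0) U"
    "((\<lambda>i. onorm (\<lambda>x. a (e i x) - a x)) \<longlongrightarrow> 0) U"
  using au assms tendsto_mono[OF U_net] by (auto simp: approx_unit_def)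

lemma e_A: "e i \<in> A"
  using au by (simp add: approx_unit_def)

lemma nd_zero:
  assumes T: "bop T" and z: "\<And>a h. a \<in> A \<Longrightarrow> T (a h) = 0"
  shows "T = (\<lambda>x. 0)"
proof -
  let ?Z = "{v. T v = 0}"
  have sub: "subspace ?Z"
    unfolding subspace_def using T by (simp add: bop_zero_apply bop_add_apply bop_scaleR_apply)
  have "span {a x |a x. a \<in> A} \<subseteq> ?Z"
    by (rule span_minimal[OF _ sub]) (use z in auto)
  moreover have "closed ?Z"
  proof -
    have "continuous_on UNIV T" using T
      by (simp add: bop_def linear_continuous_on)
    then show ?thesis by (intro closed_Collect_eq) auto
  qed
  ultimately have "closure (span {a x |a x. a \<in> A}) \<subseteq> ?Z" by (rule closure_minimal)
  then have "UNIV \<subseteq> ?Z" using nd by (simp add: nondegenerate_def)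
  then show ?thesis by auto
qed

lemma nd_eq:
  assumes "bop S" "bop T" "\<And>a. a \<in> A \<Longrightarrow> (\<lambda>h. S (a h)) = (\<lambda>h. T (a h))"
  shows "S = T"
proof -
  have "(\<lambda>x. S x - T x) = (\<lambda>x. 0)"
  proof (rule nd_zero[OF bop_diff[OF assms(1,2)]])
    fix a h assume "a \<in> A"
    then have "S (a h) = T (a h)" using fun_cong[OF assms(3), of a h] by simp
    then show "S (a h) - T (a h) = 0" by simp
  qed
  show ?thesis
  proof
    fix x show "S x = T x" using fun_cong[OF \<open>(\<lambda>x. S x - T x) = (\<lambda>x. 0)\<close>, of x] by simp
  qed
qed

lemma span_tendsto:
  assumes G: "\<And>i. bop (G i)" and S: "bop S"
    and gen: "\<And>a h. a \<in> A \<Longrightarrow> ((\<lambda>i. G i (a h)) \<longlongrightarrow> S (a h)) U"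
    and v: "v \<in> span {a x |a x. a \<in> A}"
  shows "((\<lambda>i. G i v) \<longlongrightarrow> S v) U"
proof -
  let ?P = "{v. ((\<lambda>i. G i v) \<longlongrightarrow> S v) U}"
  have "subspace ?P"
    unfolding subspace_def
  proof (intro conjI ballI allI)
    show "0 \<in> ?P" using G S by (simp add: bop_zero_apply)
    fix x y assume "x \<in> ?P" "y \<in> ?P"
    then show "x + y \<in> ?P" using G S by (simp add: bop_add_apply tendsto_add)
  next
    fix c x assume "x \<in> ?P"
    then show "c *\<^sub>R x \<in> ?P" using G S by (simp add: bop_scaleR_apply tendsto_scaleR)
  qed
  then have "span {a x |a x. a \<in> A} \<subseteq> ?P"
    by (intro span_minimal) (use gen in auto)
  then show ?thesis using v by auto
qed

lemma onorm_le_lim: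
  assumes G: "\<And>i. bop (G i)" and S: "bop S"
    and gen: "\<And>a h. a \<in> A \<Longrightarrow> ((\<lambda>i. G i (a h)) \<longlongrightarrow> S (a h)) U"
    and L: "((\<lambda>i. onorm (G i)) \<longlongrightarrow> L) U"
  shows "onorm S \<le> L"
proof -
  have L0: "0 \<le> L"
    by (rule tendsto_lowerbound[OF L]) (use G U_ne in \<open>auto simp: bop_onorm_nonneg\<close>)
  let ?Z = "{v. norm (S v) \<le> L * norm v}"
  have "span {a x |a x. a \<in> A} \<subseteq> ?Z"
  proof
    fix v assume v: "v \<in> span {a x |a x. a \<in> A}"
    have t: "((\<lambda>i. G i v) \<longlongrightarrow> S v) U"
      apply (rule span_tendsto[of G S v])
         apply (rule G)
        apply (rule S)
       apply (erule gen)
      apply (rule v)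
      done
    have "((\<lambda>i. norm (G i v)) \<longlongrightarrow> norm (S v)) U"
      by (rule tendsto_norm[OF t])
    moreover have "((\<lambda>i. onorm (G i) * norm v) \<longlongrightarrow> L * norm v) U"
      by (intro tendsto_mult L tendsto_const)
    moreover have "eventually (\<lambda>i. norm (G i v) \<le> onorm (G i) * norm v) U"
      using G by (simp add: bop_norm)
    ultimately show "v \<in> ?Z" using U_ne by (simp add: tendsto_le)
  qed
  moreover have "closed ?Z"
  proof -
    have "continuous_on UNIV S" using S by (simp add: bop_def linear_continuous_on)
    then have "continuous_on UNIV (\<lambda>v. norm (S v))" by (intro continuous_intros)
    moreover have "continuous_on UNIV (\<lambda>v. L * norm v)" by (intro continuous_intros)
    ultimately show ?thesis by (intro closed_Collect_le) auto
  qed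
  ultimately have "closure (span {a x |a x. a \<in> A}) \<subseteq> ?Z" by (rule closure_minimal)
  then have "UNIV \<subseteq> ?Z" using nd by (simp add: nondegenerate_def)
  then show ?thesis by (intro onorm_bound L0) auto
qed

end


lemma nonneg_tendsto0:
  fixes g :: "'i \<Rightarrow> real"
  assumes "\<And>i. 0 \<le> g i"
  shows "(g \<longlongrightarrow> 0) F \<longleftrightarrow> (\<forall>\<epsilon>>0. eventually (\<lambda>i. g i < \<epsilon>) F)"
  unfolding tendsto_iff dist_real_def using assms by simp

lemma squeeze0:
  fixes g f :: "'i \<Rightarrow> real"
  assumes "\<And>i. f i \<le> g i" "\<And>i. 0 \<le> f i" "(g \<longlongrightarrow> 0) F"
  shows "(f \<longlongrightarrow> 0) F"
proof (rule Lim_null_comparison[OF _ assms(3)])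
  show "eventually (\<lambda>i. norm (f i) \<le> g i) F" using assms(1,2) by simp
qed

lemma bop_cd1: "bop S \<Longrightarrow> bop T \<Longrightarrow> bop x \<Longrightarrow> bop (\<lambda>h. S (x h) - T (x h))"
  by (rule bop_diff[OF bop_comp'[of S x] bop_comp'[of T x]])

lemma bop_cd2: "bop S \<Longrightarrow> bop T \<Longrightarrow> bop x \<Longrightarrow> bop (\<lambda>h. x (S h) - x (T h))"
  by (rule bop_diff[OF bop_comp'[of x S] bop_comp'[of x T]])

context ms
begin

definition SC :: "('i \<Rightarrow> 'h \<Rightarrow> 'h) \<Rightarrow> ('h \<Rightarrow> 'h) \<Rightarrow> bool" where
  "SC F T \<longleftrightarrow> (\<forall>x\<in>A. ((\<lambda>i. onorm (\<lambda>h. F i (x h) - T (x h))) \<longlongrightarrow> 0) U \<and>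
                      ((\<lambda>i. onorm (\<lambda>h. x (F i h) - x (T h))) \<longlongrightarrow> 0) U)"

lemma sc_iff:
  assumes F: "\<And>i. F i \<in> A" and T: "bop T"
  shows "strict_conv A U F T \<longleftrightarrow> SC F T"
proof -
  have e1: "((\<lambda>i. onorm (\<lambda>h. F i (x h) - T (x h))) \<longlongrightarrow> 0) U \<longleftrightarrow> (\<forall>\<epsilon>>0. eventually (\<lambda>i. onorm (\<lambda>h. F i (x h) - T (x h)) < \<epsilon>) U)"
    if "x \<in> A" for x
    by (rule nonneg_tendsto0) (rule bop_onorm_nonneg[OF bop_cd1[OF A_bop[OF F] T A_bop[OF that]]])
  have e2: "((\<lambda>i. onorm (\<lambda>h. x (F i h) - x (T h))) \<longlongrightarrow> 0) U \<longleftrightarrow> (\<forall>\<epsilon>>0. eventually (\<lambda>i. onorm (\<lambda>h. x (F i h) - x (T h)) < \<epsilon>) U)"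
    if "x \<in> A" for x
    by (rule nonneg_tendsto0) (rule bop_onorm_nonneg[OF bop_cd2[OF A_bop[OF F] T A_bop[OF that]]])
  show ?thesis
    unfolding strict_conv_def SC_def
  proof
    assume h: "\<forall>x\<in>A. \<forall>\<epsilon>>0. eventually (\<lambda>i. onorm (\<lambda>h. F i (x h) - T (x h)) < \<epsilon> \<and> onorm (\<lambda>h. x (F i h) - x (T h)) < \<epsilon>) U"
    show "\<forall>x\<in>A. ((\<lambda>i. onorm (\<lambda>h. F i (x h) - T (x h))) \<longlongrightarrow> 0) U \<and> ((\<lambda>i. onorm (\<lambda>h. x (F i h) - x (T h))) \<longlongrightarrow> 0) U"
    proof (intro ballI conjI)
      fix x assume x: "x \<in> A"
      show "((\<lambda>i. onorm (\<lambda>h. F i (x h) - T (x h))) \<longlongrightarrow> 0) U"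
        unfolding e1[OF x] using h x by (auto simp: eventually_conj_iff)
      show "((\<lambda>i. onorm (\<lambda>h. x (F i h) - x (T h))) \<longlongrightarrow> 0) U"
        unfolding e2[OF x] using h x by (auto simp: eventually_conj_iff)
    qed
  next
    assume h: "\<forall>x\<in>A. ((\<lambda>i. onorm (\<lambda>h. F i (x h) - T (x h))) \<longlongrightarrow> 0) U \<and> ((\<lambda>i. onorm (\<lambda>h. x (F i h) - x (T h))) \<longlongrightarrow> 0) U"
    show "\<forall>x\<in>A. \<forall>\<epsilon>>0. eventually (\<lambda>i. onorm (\<lambda>h. F i (x h) - T (x h)) < \<epsilon> \<and> onorm (\<lambda>h. x (F i h) - x (T h)) < \<epsilon>) U"
    proof (intro ballI allI impI)
      fix x :: "'h \<Rightarrow> 'h" and \<epsilon> :: real assume x: "x \<in> A" and \<epsilon>: "\<epsilon> > 0"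
      have a: "eventually (\<lambda>i. onorm (\<lambda>h. F i (x h) - T (x h)) < \<epsilon>) U" using h x \<epsilon> e1[OF x] by blast
      have b: "eventually (\<lambda>i. onorm (\<lambda>h. x (F i h) - x (T h)) < \<epsilon>) U" using h x \<epsilon> e2[OF x] by blast
      show "eventually (\<lambda>i. onorm (\<lambda>h. F i (x h) - T (x h)) < \<epsilon> \<and> onorm (\<lambda>h. x (F i h) - x (T h)) < \<epsilon>) U"
        using eventually_conj[OF a b] .
    qed
  qed
qed

definition bnd :: "('i \<Rightarrow> 'h \<Rightarrow> 'h) \<Rightarrow> bool" where
  "bnd F \<longleftrightarrow> (\<exists>C. \<forall>i. onorm (F i) \<le> C)"

definition sl :: "('i \<Rightarrow> 'h \<Rightarrow> 'h) \<Rightarrow> ('h \<Rightarrow> 'h) \<Rightarrow> bool" where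
  "sl F T \<longleftrightarrow> (\<forall>i. F i \<in> A) \<and> bnd F \<and> bop T \<and> SC F T"

lemma sU_iff: "F \<in> sU_fams A U \<longleftrightarrow> (\<exists>T. sl F T)"
  unfolding sU_fams_def bfam_def sl_def bnd_def using sc_iff by blast

lemma slD: assumes "sl F T" shows "\<And>i. F i \<in> A" "bnd F" "bop T" "SC F T"
  using assms by (auto simp: sl_def)

lemma SC_const: "a \<in> A \<Longrightarrow> SC (\<lambda>i. a) a"
  by (simp add: SC_def onorm_zero)

lemma SC_add:
  assumes F: "\<And>i. F i \<in> A" and G: "\<And>i. G i \<in> A" and T: "bop T" and S: "bop S"
    and f: "SC F T" and g: "SC G S"
  shows "SC (\<lambda>i h. F i h + G i h) (\<lambda>h. T h + S h)"
  unfolding SC_def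
proof (intro ballI conjI)
  fix x assume x: "x \<in> A"
  have bx: "bop x" by (rule A_bop[OF x])
  have bF: "bop (F i)" "bop (G i)" for i by (simp_all add: A_bop F G)
  show "((\<lambda>i. onorm (\<lambda>h. (F i (x h) + G i (x h)) - (T (x h) + S (x h)))) \<longlongrightarrow> 0) U"
  proof (rule squeeze0)
    fix i
    have eq: "(\<lambda>h. (F i (x h) + G i (x h)) - (T (x h) + S (x h))) = (\<lambda>h. (F i (x h) - T (x h)) + (G i (x h) - S (x h)))"
      by (simp add: algebra_simps)
    show "onorm (\<lambda>h. (F i (x h) + G i (x h)) - (T (x h) + S (x h))) \<le> onorm (\<lambda>h. F i (x h) - T (x h)) + onorm (\<lambda>h. G i (x h) - S (x h))"
      unfolding eq by (rule onorm_add_le[OF bop_cd1[OF bF(1) T bx] bop_cd1[OF bF(2) S bx]])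
    show "0 \<le> onorm (\<lambda>h. (F i (x h) + G i (x h)) - (T (x h) + S (x h)))"
      by (rule bop_onorm_nonneg[OF bop_cd1[OF bop_add[OF bF] bop_add[OF T S] bx]])
    show "((\<lambda>i. onorm (\<lambda>h. F i (x h) - T (x h)) + onorm (\<lambda>h. G i (x h) - S (x h))) \<longlongrightarrow> 0) U"
      using f g x unfolding SC_def by (intro tendsto_add_zero) auto
  qed
  show "((\<lambda>i. onorm (\<lambda>h. x (F i h + G i h) - x (T h + S h))) \<longlongrightarrow> 0) U"
  proof (rule squeeze0)
    fix i
    have eq: "(\<lambda>h. x (F i h + G i h) - x (T h + S h)) = (\<lambda>h. (x (F i h) - x (T h)) + (x (G i h) - x (S h)))"
      by (simp add: bop_add_apply[OF bx] algebra_simps)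
    show "onorm (\<lambda>h. x (F i h + G i h) - x (T h + S h)) \<le> onorm (\<lambda>h. x (F i h) - x (T h)) + onorm (\<lambda>h. x (G i h) - x (S h))"
      unfolding eq by (rule onorm_add_le[OF bop_cd2[OF bF(1) T bx] bop_cd2[OF bF(2) S bx]])
    show "0 \<le> onorm (\<lambda>h. x (F i h + G i h) - x (T h + S h))"
      by (rule bop_onorm_nonneg[OF bop_cd2[OF bop_add[OF bF] bop_add[OF T S] bx]])
    show "((\<lambda>i. onorm (\<lambda>h. x (F i h) - x (T h)) + onorm (\<lambda>h. x (G i h) - x (S h))) \<longlongrightarrow> 0) U"
      using f g x unfolding SC_def by (intro tendsto_add_zero) auto
  qed
qed

lemma SC_scale:
  assumes F: "\<And>i. F i \<in> A" and T: "bop T" and f: "SC F T"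
  shows "SC (\<lambda>i h. scaleC c (F i h)) (\<lambda>h. scaleC c (T h))"
  unfolding SC_def
proof (intro ballI conjI)
  fix x assume x: "x \<in> A"
  have bx: "bop x" by (rule A_bop[OF x])
  have bF: "bop (F i)" for i by (simp_all add: A_bop F)
  show "((\<lambda>i. onorm (\<lambda>h. scaleC c (F i (x h)) - scaleC c (T (x h)))) \<longlongrightarrow> 0) U"
  proof (rule squeeze0)
    fix i
    have eq: "(\<lambda>h. scaleC c (F i (x h)) - scaleC c (T (x h))) = (\<lambda>h. scaleC c (F i (x h) - T (x h)))"
      by (simp add: scaleC_diff_right)
    show "onorm (\<lambda>h. scaleC c (F i (x h)) - scaleC c (T (x h))) \<le> cmod c * onorm (\<lambda>h. F i (x h) - T (x h))"
      unfolding eq by (rule onorm_scaleC_le[OF bop_cd1[OF bF T bx]])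
    show "0 \<le> onorm (\<lambda>h. scaleC c (F i (x h)) - scaleC c (T (x h)))"
      by (rule bop_onorm_nonneg[OF bop_cd1[OF bop_scale[OF bF] bop_scale[OF T] bx]])
    show "((\<lambda>i. cmod c * onorm (\<lambda>h. F i (x h) - T (x h))) \<longlongrightarrow> 0) U"
      using f x unfolding SC_def by (intro tendsto_mult_right_zero) auto
  qed
  show "((\<lambda>i. onorm (\<lambda>h. x (scaleC c (F i h)) - x (scaleC c (T h)))) \<longlongrightarrow> 0) U"
  proof (rule squeeze0)
    fix i
    have eq: "(\<lambda>h. x (scaleC c (F i h)) - x (scaleC c (T h))) = (\<lambda>h. scaleC c (x (F i h) - x (T h)))"
      by (simp add: bopD(2)[OF bx] scaleC_diff_right)
    show "onorm (\<lambda>h. x (scaleC c (F i h)) - x (scaleC c (T h))) \<le> cmod c * onorm (\<lambda>h. x (F i h) - x (T h))"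
      unfolding eq by (rule onorm_scaleC_le[OF bop_cd2[OF bF T bx]])
    show "0 \<le> onorm (\<lambda>h. x (scaleC c (F i h)) - x (scaleC c (T h)))"
      by (rule bop_onorm_nonneg[OF bop_cd2[OF bop_scale[OF bF] bop_scale[OF T] bx]])
    show "((\<lambda>i. cmod c * onorm (\<lambda>h. x (F i h) - x (T h))) \<longlongrightarrow> 0) U"
      using f x unfolding SC_def by (intro tendsto_mult_right_zero) auto
  qed
qed

end


context ms
begin

lemma SC_diff:
  assumes F: "\<And>i. F i \<in> A" and G: "\<And>i. G i \<in> A" and T: "bop T" and S: "bop S"
    and f: "SC F T" and g: "SC G S"
  shows "SC (\<lambda>i h. F i h - G i h) (\<lambda>h. T h - S h)"
proof -
  have g': "SC (\<lambda>i h. scaleC (-1) (G i h)) (\<lambda>h. scaleC (-1) (S h))" by (rule SC_scale[OF G S g])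
  have G': "(\<lambda>h. scaleC (-1) (G i h)) \<in> A" for i by (rule A_scale[OF G])
  have "SC (\<lambda>i h. F i h + scaleC (-1) (G i h)) (\<lambda>h. T h + scaleC (-1) (S h))"
    by (rule SC_add[OF F G' T bop_scale[OF S] f g'])
  then show ?thesis by (simp add: scaleC_minus_left scaleC_one)
qed

lemma SC_mult:
  assumes F: "\<And>i. F i \<in> A" and G: "\<And>i. G i \<in> A" and T: "bop T" and S: "bop S"
    and f: "SC F T" and g: "SC G S"
    and bF: "\<And>i. onorm (F i) \<le> CF" and bG: "\<And>i. onorm (G i) \<le> CG"
    and mS: "\<And>x. x \<in> A \<Longrightarrow> (\<lambda>h. S (x h)) \<in> A"
    and mT: "\<And>x. x \<in> A \<Longrightarrow> (\<lambda>h. x (T h)) \<in> A"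
  shows "SC (\<lambda>i h. F i (G i h)) (\<lambda>h. T (S h))"
  unfolding SC_def
proof (intro ballI conjI)
  fix x assume x: "x \<in> A"
  have bx: "bop x" by (rule A_bop[OF x])
  have bFi: "bop (F i)" and bGi: "bop (G i)" for i by (simp_all add: A_bop F G)
  show "((\<lambda>i. onorm (\<lambda>h. F i (G i (x h)) - T (S (x h)))) \<longlongrightarrow> 0) U"
  proof (rule squeeze0)
    fix i
    have eq: "(\<lambda>h. F i (G i (x h)) - T (S (x h))) = (\<lambda>h. F i (G i (x h) - S (x h)) + (F i (S (x h)) - T (S (x h))))"
      by (simp add: bop_diff_apply[OF bFi])
    have b1: "bop (\<lambda>h. F i (G i (x h) - S (x h)))" by (rule bop_comp'[OF bFi bop_cd1[OF bGi S bx]])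
    have b2: "bop (\<lambda>h. F i (S (x h)) - T (S (x h)))" by (rule bop_cd1[OF bFi T bop_comp'[OF S bx]])
    have "onorm (\<lambda>h. F i (G i (x h) - S (x h))) \<le> onorm (F i) * onorm (\<lambda>h. G i (x h) - S (x h))"
      by (rule onorm_comp_le[OF bFi bop_cd1[OF bGi S bx]])
    also have "\<dots> \<le> CF * onorm (\<lambda>h. G i (x h) - S (x h))"
      by (rule mult_right_mono[OF bF bop_onorm_nonneg[OF bop_cd1[OF bGi S bx]]])
    finally have l1: "onorm (\<lambda>h. F i (G i (x h) - S (x h))) \<le> CF * onorm (\<lambda>h. G i (x h) - S (x h))" .
    show "onorm (\<lambda>h. F i (G i (x h)) - T (S (x h))) \<le> CF * onorm (\<lambda>h. G i (x h) - S (x h)) + onorm (\<lambda>h. F i (S (x h)) - T (S (x h)))"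
      unfolding eq using onorm_add_le[OF b1 b2] l1 by linarith
    show "0 \<le> onorm (\<lambda>h. F i (G i (x h)) - T (S (x h)))"
      by (rule bop_onorm_nonneg[OF bop_diff[OF bop_comp'[OF bFi bop_comp'[OF bGi bx]] bop_comp'[OF T bop_comp'[OF S bx]]]])
  next
    have t1: "((\<lambda>i. onorm (\<lambda>h. G i (x h) - S (x h))) \<longlongrightarrow> 0) U" using g x by (simp add: SC_def)
    have t2: "((\<lambda>i. onorm (\<lambda>h. F i (S (x h)) - T (S (x h)))) \<longlongrightarrow> 0) U"
      using conjunct1[OF bspec[OF f[unfolded SC_def] mS[OF x]]] by simp
    show "((\<lambda>i. CF * onorm (\<lambda>h. G i (x h) - S (x h)) + onorm (\<lambda>h. F i (S (x h)) - T (S (x h)))) \<longlongrightarrow> 0) U"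
      by (intro tendsto_add_zero tendsto_mult_right_zero t1 t2)
  qed
  show "((\<lambda>i. onorm (\<lambda>h. x (F i (G i h)) - x (T (S h)))) \<longlongrightarrow> 0) U"
  proof (rule squeeze0)
    fix i
    have eq: "(\<lambda>h. x (F i (G i h)) - x (T (S h))) = (\<lambda>h. (x (F i (G i h)) - x (T (G i h))) + (x (T (G i h)) - x (T (S h))))"
      by simp
    have b1: "bop (\<lambda>h. x (F i (G i h)) - x (T (G i h)))" by (rule bop_comp'[OF bop_cd2[OF bFi T bx] bGi])
    have b2: "bop (\<lambda>h. x (T (G i h)) - x (T (S h)))" using bop_cd2[OF bGi S bop_comp'[OF bx T]] by simp
    have "onorm (\<lambda>h. x (F i (G i h)) - x (T (G i h))) \<le> onorm (\<lambda>h. x (F i h) - x (T h)) * onorm (G i)"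
      using onorm_comp_le[OF bop_cd2[OF bFi T bx] bGi] by simp
    also have "\<dots> \<le> onorm (\<lambda>h. x (F i h) - x (T h)) * CG"
      by (rule mult_left_mono[OF bG bop_onorm_nonneg[OF bop_cd2[OF bFi T bx]]])
    finally have l1: "onorm (\<lambda>h. x (F i (G i h)) - x (T (G i h))) \<le> onorm (\<lambda>h. x (F i h) - x (T h)) * CG" .
    show "onorm (\<lambda>h. x (F i (G i h)) - x (T (S h))) \<le> onorm (\<lambda>h. x (F i h) - x (T h)) * CG + onorm (\<lambda>h. x (T (G i h)) - x (T (S h)))"
      unfolding eq using onorm_add_le[OF b1 b2] l1 by linarith
    show "0 \<le> onorm (\<lambda>h. x (F i (G i h)) - x (T (S h)))"
      by (rule bop_onorm_nonneg[OF bop_diff[OF bop_comp'[OF bx bop_comp'[OF bFi bGi]] bop_comp'[OF bx bop_comp'[OF T S]]]])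
  next
    have t1: "((\<lambda>i. onorm (\<lambda>h. x (F i h) - x (T h))) \<longlongrightarrow> 0) U" using f x by (simp add: SC_def)
    have t2: "((\<lambda>i. onorm (\<lambda>h. x (T (G i h)) - x (T (S h)))) \<longlongrightarrow> 0) U"
      using conjunct2[OF bspec[OF g[unfolded SC_def] mT[OF x]]] by simp
    show "((\<lambda>i. onorm (\<lambda>h. x (F i h) - x (T h)) * CG + onorm (\<lambda>h. x (T (G i h)) - x (T (S h)))) \<longlongrightarrow> 0) U"
      by (intro tendsto_add_zero tendsto_mult_left_zero t1 t2)
  qed
qed

lemma SC_adj:
  assumes F: "\<And>i. F i \<in> A" and T: "bop T" and f: "SC F T"
  shows "SC (\<lambda>i. adj (F i)) (adj T)"
  unfolding SC_def
proof (intro ballI conjI)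
  fix x assume x: "x \<in> A"
  have bx: "bop x" by (rule A_bop[OF x])
  have bax: "bop (adj x)" by (rule adj_bop[OF bx])
  have bFi: "bop (F i)" for i by (simp add: A_bop F)
  have e1: "(\<lambda>h. adj (F i) (x h) - adj T (x h)) = adj (\<lambda>h. adj x (F i h) - adj x (T h))" for i
    by (simp add: adj_diff[OF bop_comp'[OF bax bFi] bop_comp'[OF bax T]] adj_comp[OF bax bFi]
        adj_comp[OF bax T] adj_adj[OF bx])
  have e2: "(\<lambda>h. x (adj (F i) h) - x (adj T h)) = adj (\<lambda>h. F i (adj x h) - T (adj x h))" for i
    by (simp add: adj_diff[OF bop_comp'[OF bFi bax] bop_comp'[OF T bax]] adj_comp[OF bFi bax]
        adj_comp[OF T bax] adj_adj[OF bx])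
  have "((\<lambda>i. onorm (\<lambda>h. adj x (F i h) - adj x (T h))) \<longlongrightarrow> 0) U"
    using f A_adj[OF x] unfolding SC_def by blast
  then show "((\<lambda>i. onorm (\<lambda>h. adj (F i) (x h) - adj T (x h))) \<longlongrightarrow> 0) U"
    unfolding e1 by (simp add: onorm_adj[OF bop_cd2[OF bFi T bax]])
  have "((\<lambda>i. onorm (\<lambda>h. F i (adj x h) - T (adj x h))) \<longlongrightarrow> 0) U"
    using f A_adj[OF x] unfolding SC_def by blast
  then show "((\<lambda>i. onorm (\<lambda>h. x (adj (F i) h) - x (adj T h))) \<longlongrightarrow> 0) U"
    unfolding e2 by (simp add: onorm_adj[OF bop_cd1[OF bFi T bax]])
qed

lemma SC_mult_A:
  assumes F: "\<And>i. F i \<in> A" and T: "bop T" and f: "SC F T" and x: "x \<in> A"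
  shows "(\<lambda>h. T (x h)) \<in> A" "(\<lambda>h. x (T h)) \<in> A"
proof -
  have bx: "bop x" by (rule A_bop[OF x])
  show "(\<lambda>h. T (x h)) \<in> A"
  proof (rule A_closed[OF bop_comp'[OF T bx]])
    fix \<epsilon> :: real assume \<epsilon>: "\<epsilon> > 0"
    have "((\<lambda>i. onorm (\<lambda>h. F i (x h) - T (x h))) \<longlongrightarrow> 0) U" using f x by (simp add: SC_def)
    then have "eventually (\<lambda>i. onorm (\<lambda>h. F i (x h) - T (x h)) < \<epsilon>) U" using \<epsilon> by (rule order_tendstoD(2))
    then obtain i where i: "onorm (\<lambda>h. F i (x h) - T (x h)) < \<epsilon>" using eventually_happens'[OF U_ne] by blast
    show "\<exists>S\<in>A. onorm (\<lambda>y. T (x y) - S y) < \<epsilon>"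
      by (rule bexI[of _ "\<lambda>h. F i (x h)"]) (use i onorm_diff_sym[of "\<lambda>h. F i (x h)" "\<lambda>h. T (x h)"] A_comp[OF F x] in auto)
  qed
  show "(\<lambda>h. x (T h)) \<in> A"
  proof (rule A_closed[OF bop_comp'[OF bx T]])
    fix \<epsilon> :: real assume \<epsilon>: "\<epsilon> > 0"
    have "((\<lambda>i. onorm (\<lambda>h. x (F i h) - x (T h))) \<longlongrightarrow> 0) U" using f x by (simp add: SC_def)
    then have "eventually (\<lambda>i. onorm (\<lambda>h. x (F i h) - x (T h)) < \<epsilon>) U" using \<epsilon> by (rule order_tendstoD(2))
    then obtain i where i: "onorm (\<lambda>h. x (F i h) - x (T h)) < \<epsilon>" using eventually_happens'[OF U_ne] by blast
    show "\<exists>S\<in>A. onorm (\<lambda>y. x (T y) - S y) < \<epsilon>"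
      by (rule bexI[of _ "\<lambda>h. x (F i h)"]) (use i onorm_diff_sym[of "\<lambda>h. x (F i h)" "\<lambda>h. x (T h)"] A_comp[OF x F] in auto)
  qed
qed

lemma SC_unique:
  assumes F: "\<And>i. F i \<in> A" and T: "bop T" and S: "bop S" and f: "SC F T" and g: "SC F S"
  shows "T = S"
proof (rule nd_eq[OF T S])
  fix a assume a: "a \<in> A"
  have ba: "bop a" by (rule A_bop[OF a])
  have bFi: "bop (F i)" for i by (simp add: A_bop F)
  define c where "c = onorm (\<lambda>h. T (a h) - S (a h))"
  have c0: "0 \<le> c" unfolding c_def by (rule bop_onorm_nonneg[OF bop_cd1[OF T S ba]])
  have "c \<le> 0"
  proof (rule tendsto_le[OF U_ne])
    show "((\<lambda>i. onorm (\<lambda>h. F i (a h) - T (a h)) + onorm (\<lambda>h. F i (a h) - S (a h))) \<longlongrightarrow> 0) U"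
      using f g a unfolding SC_def by (intro tendsto_add_zero) auto
    show "((\<lambda>i. c) \<longlongrightarrow> c) U" by simp
    show "eventually (\<lambda>i. c \<le> onorm (\<lambda>h. F i (a h) - T (a h)) + onorm (\<lambda>h. F i (a h) - S (a h))) U"
    proof (rule always_eventually, rule allI)
      fix i
      have "c \<le> onorm (\<lambda>h. T (a h) - F i (a h)) + onorm (\<lambda>h. F i (a h) - S (a h))"
        unfolding c_def by (rule onorm_diff_tri[OF bop_comp'[OF T ba] bop_comp'[OF bFi ba] bop_comp'[OF S ba]])
      then show "c \<le> onorm (\<lambda>h. F i (a h) - T (a h)) + onorm (\<lambda>h. F i (a h) - S (a h))"
        by (simp add: onorm_diff_sym[of "\<lambda>h. T (a h)"])
    qed
  qed
  then have "c = 0" using c0 by simp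
  then have "(\<lambda>h. T (a h) - S (a h)) = (\<lambda>h. 0)"
    unfolding c_def by (simp add: onorm_eq_zero_iff[OF bop_cd1[OF T S ba]])
  then show "(\<lambda>h. T (a h)) = (\<lambda>h. S (a h))"
    by (metis (mono_tags) eq_iff_diff_eq_0)
qed

end


context ms
begin

lemma bndD: assumes "bnd F" obtains C where "\<And>i. onorm (F i) \<le> C"
  using assms unfolding bnd_def by blast

lemma sl_const: "a \<in> A \<Longrightarrow> sl (\<lambda>i. a) a"
  by (auto simp: sl_def bnd_def SC_const A_bop)

lemma sl_add: assumes "sl F T" "sl G S" shows "sl (\<lambda>i h. F i h + G i h) (\<lambda>h. T h + S h)"
proof -
  note f = slD[OF assms(1)] and g = slD[OF assms(2)]
  obtain CF where CF: "\<And>i. onorm (F i) \<le> CF" using f(2) unfolding bnd_def by blast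
  obtain CG where CG: "\<And>i. onorm (G i) \<le> CG" using g(2) unfolding bnd_def by blast
  have "bnd (\<lambda>i h. F i h + G i h)"
    unfolding bnd_def
  proof (intro exI allI)
    fix i show "onorm (\<lambda>h. F i h + G i h) \<le> CF + CG"
      using onorm_add_le[OF A_bop[OF f(1)] A_bop[OF g(1)], of i i] CF[of i] CG[of i] by linarith
  qed
  then show ?thesis unfolding sl_def
    using A_add[OF f(1) g(1)] bop_add[OF f(3) g(3)] SC_add[OF f(1) g(1) f(3) g(3) f(4) g(4)] by blast
qed

lemma sl_scale: assumes "sl F T" shows "sl (\<lambda>i h. scaleC c (F i h)) (\<lambda>h. scaleC c (T h))"
proof -
  note f = slD[OF assms(1)]
  obtain CF where CF: "\<And>i. onorm (F i) \<le> CF" using f(2) unfolding bnd_def by blast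
  have "bnd (\<lambda>i h. scaleC c (F i h))"
    unfolding bnd_def
  proof (intro exI allI)
    fix i
    have "onorm (\<lambda>h. scaleC c (F i h)) \<le> cmod c * onorm (F i)" by (rule onorm_scaleC_le[OF A_bop[OF f(1)]])
    also have "\<dots> \<le> cmod c * CF" by (rule mult_left_mono[OF CF]) simp
    finally show "onorm (\<lambda>h. scaleC c (F i h)) \<le> cmod c * CF" .
  qed
  then show ?thesis unfolding sl_def
    using A_scale[OF f(1)] bop_scale[OF f(3)] SC_scale[OF f(1) f(3) f(4)] by blast
qed

lemma sl_diff: assumes "sl F T" "sl G S" shows "sl (\<lambda>i h. F i h - G i h) (\<lambda>h. T h - S h)"
proof -
  have "sl (\<lambda>i h. F i h + scaleC (-1) (G i h)) (\<lambda>h. T h + scaleC (-1) (S h))"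
    using sl_add[OF assms(1) sl_scale[OF assms(2), of "-1"]] by simp
  then show ?thesis by (simp add: scaleC_minus_left scaleC_one)
qed

lemma sl_multA: assumes "sl F T" "x \<in> A" shows "(\<lambda>h. T (x h)) \<in> A" "(\<lambda>h. x (T h)) \<in> A"
  using SC_mult_A[OF slD(1)[OF assms(1)] slD(3)[OF assms(1)] slD(4)[OF assms(1)] assms(2)] by auto

lemma sl_mult: assumes "sl F T" "sl G S" shows "sl (\<lambda>i h. F i (G i h)) (\<lambda>h. T (S h))"
proof -
  note f = slD[OF assms(1)] and g = slD[OF assms(2)]
  obtain CF where CF: "\<And>i. onorm (F i) \<le> CF" using f(2) unfolding bnd_def by blast
  obtain CG where CG: "\<And>i. onorm (G i) \<le> CG" using g(2) unfolding bnd_def by blast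
  have CF0: "0 \<le> CF" using CF[of undefined] bop_onorm_nonneg[OF A_bop[OF f(1)]] by (rule order_trans[rotated])
  have "bnd (\<lambda>i h. F i (G i h))"
    unfolding bnd_def
  proof (intro exI allI)
    fix i
    have "onorm (\<lambda>h. F i (G i h)) \<le> onorm (F i) * onorm (G i)" by (rule onorm_comp_le[OF A_bop[OF f(1)] A_bop[OF g(1)]])
    also have "\<dots> \<le> CF * CG"
      by (rule mult_mono[OF CF CG CF0 bop_onorm_nonneg[OF A_bop[OF g(1)]]])
    finally show "onorm (\<lambda>h. F i (G i h)) \<le> CF * CG" .
  qed
  moreover have "SC (\<lambda>i h. F i (G i h)) (\<lambda>h. T (S h))"
    by (rule SC_mult[OF f(1) g(1) f(3) g(3) f(4) g(4) CF CG sl_multA(1)[OF assms(2)] sl_multA(2)[OF assms(1)]])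
  ultimately show ?thesis unfolding sl_def
    using A_comp[OF f(1) g(1)] bop_comp'[OF f(3) g(3)] by blast
qed

lemma sl_adj: assumes "sl F T" shows "sl (\<lambda>i. adj (F i)) (adj T)"
proof -
  note f = slD[OF assms(1)]
  obtain CF where CF: "\<And>i. onorm (F i) \<le> CF" using f(2) unfolding bnd_def by blast
  have "bnd (\<lambda>i. adj (F i))"
    unfolding bnd_def using CF by (auto simp: onorm_adj[OF A_bop[OF f(1)]])
  then show ?thesis unfolding sl_def
    using A_adj[OF f(1)] adj_bop[OF f(3)] SC_adj[OF f(1) f(3) f(4)] by blast
qed

lemma sl_unique: "sl F T \<Longrightarrow> sl F S \<Longrightarrow> T = S"
  using SC_unique by (auto simp: sl_def)

lemma equiv_iff:
  assumes "sl F T" "sl G S"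
  shows "strict_conv A U (\<lambda>i h. F i h - G i h) (\<lambda>h. 0) \<longleftrightarrow> T = S"
proof -
  have d: "sl (\<lambda>i h. F i h - G i h) (\<lambda>h. T h - S h)" by (rule sl_diff[OF assms])
  have "strict_conv A U (\<lambda>i h. F i h - G i h) (\<lambda>h. 0) \<longleftrightarrow> SC (\<lambda>i h. F i h - G i h) (\<lambda>h. 0)"
    by (rule sc_iff[OF slD(1)[OF d] bop_zero])
  also have "\<dots> \<longleftrightarrow> T = S"
  proof
    assume h: "SC (\<lambda>i h. F i h - G i h) (\<lambda>h. 0)"
    have "(\<lambda>h. T h - S h) = (\<lambda>h. 0)"
      by (rule SC_unique[OF slD(1)[OF d] slD(3)[OF d] bop_zero slD(4)[OF d] h])
    show "T = S"
    proof
      fix x show "T x = S x" using fun_cong[OF \<open>(\<lambda>h. T h - S h) = (\<lambda>h. 0)\<close>, of x] by simp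
    qed
  next
    assume "T = S"
    then show "SC (\<lambda>i h. F i h - G i h) (\<lambda>h. 0)" using slD(4)[OF d] by simp
  qed
  finally show ?thesis .
qed

definition cls :: "('h \<Rightarrow> 'h) \<Rightarrow> ('i \<Rightarrow> 'h \<Rightarrow> 'h) set" where
  "cls T = {G. sl G T}"

definition MA :: "('h \<Rightarrow> 'h) set" where
  "MA = {T. \<exists>F. sl F T}"

lemma qclass_sl: assumes "sl F T" shows "qclass A U F = cls T"
proof (intro set_eqI iffI)
  fix G assume "G \<in> qclass A U F"
  then have G: "G \<in> sU_fams A U" and eqv: "strict_conv A U (\<lambda>i h. F i h - G i h) (\<lambda>h. 0)"
    by (auto simp: qclass_def)
  from G obtain S where S: "sl G S" by (auto simp: sU_iff)
  with eqv assms have "T = S" by (simp add: equiv_iff)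
  then show "G \<in> cls T" using S by (simp add: cls_def)
next
  fix G assume "G \<in> cls T"
  then have S: "sl G T" by (simp add: cls_def)
  then show "G \<in> qclass A U F"
    unfolding qclass_def using equiv_iff[OF assms S] sU_iff by blast
qed

lemma MA_I: "sl F T \<Longrightarrow> T \<in> MA"
  by (auto simp: MA_def)

lemma MA_bop: "T \<in> MA \<Longrightarrow> bop T"
  by (auto simp: MA_def sl_def)

lemma MA_mult: "T \<in> MA \<Longrightarrow> x \<in> A \<Longrightarrow> (\<lambda>h. T (x h)) \<in> A \<and> (\<lambda>h. x (T h)) \<in> A"
  by (auto simp: MA_def dest: sl_multA)

lemma A_MA: "a \<in> A \<Longrightarrow> a \<in> MA"
  by (rule MA_I[OF sl_const])

lemma Q_eq: "Q A U = cls ` MA"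
proof (intro set_eqI iffI)
  fix c assume "c \<in> Q A U"
  then obtain F where F: "F \<in> sU_fams A U" and c: "c = qclass A U F" by (auto simp: Q_def)
  from F obtain T where T: "sl F T" by (auto simp: sU_iff)
  then show "c \<in> cls ` MA" using c qclass_sl[OF T] MA_I[OF T] by blast
next
  fix c assume "c \<in> cls ` MA"
  then obtain T F where T: "sl F T" and c: "c = cls T" by (auto simp: MA_def)
  then show "c \<in> Q A U" unfolding Q_def using qclass_sl[OF T] sU_iff by blast
qed

lemma cls_inj: assumes "T \<in> MA" "cls T = cls S" shows "T = S"
proof -
  from assms(1) obtain F where F: "sl F T" by (auto simp: MA_def)
  then have "F \<in> cls T" by (simp add: cls_def)
  then have "F \<in> cls S" by (simp only: assms(2))
  then have "sl F S" by (simp add: cls_def)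
  then show ?thesis using F sl_unique by blast
qed

lemma qrep_cls: assumes "T \<in> MA" shows "sl (qrep (cls T)) T"
proof -
  from assms obtain F where "sl F T" by (auto simp: MA_def)
  then have "\<exists>F. F \<in> cls T" by (auto simp: cls_def)
  then have "qrep (cls T) \<in> cls T" unfolding qrep_def by (rule someI_ex)
  then show ?thesis by (simp add: cls_def)
qed

lemma qzero_cls: "qzero A U = cls (\<lambda>h. 0)"
  unfolding qzero_def using qclass_sl[OF sl_const[OF A_zero]] by simp

lemma qconst_cls: "a \<in> A \<Longrightarrow> qconst A U a = cls a"
  unfolding qconst_def by (rule qclass_sl[OF sl_const])

lemma qadd_cls: assumes "T \<in> MA" "S \<in> MA"
  shows "qadd A U (cls T) (cls S) = cls (\<lambda>h. T h + S h)" "(\<lambda>h. T h + S h) \<in> MA"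
  unfolding qadd_def using sl_add[OF qrep_cls[OF assms(1)] qrep_cls[OF assms(2)]]
  by (auto simp: qclass_sl MA_I)

lemma qscale_cls: assumes "T \<in> MA"
  shows "qscale A U z (cls T) = cls (\<lambda>h. scaleC z (T h))" "(\<lambda>h. scaleC z (T h)) \<in> MA"
  unfolding qscale_def using sl_scale[OF qrep_cls[OF assms(1)], of z]
  by (auto simp: qclass_sl MA_I)

lemma qmul_cls: assumes "T \<in> MA" "S \<in> MA"
  shows "qmul A U (cls T) (cls S) = cls (\<lambda>h. T (S h))" "(\<lambda>h. T (S h)) \<in> MA"
  unfolding qmul_def using sl_mult[OF qrep_cls[OF assms(1)] qrep_cls[OF assms(2)]]
  by (auto simp: qclass_sl MA_I)

lemma qstar_cls: assumes "T \<in> MA"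
  shows "qstar A U (cls T) = cls (adj T)" "adj T \<in> MA"
  unfolding qstar_def using sl_adj[OF qrep_cls[OF assms(1)]]
  by (auto simp: qclass_sl MA_I)

lemma qnorm_ge: assumes "T \<in> MA" shows "onorm T \<le> qnorm A U (cls T)"
  unfolding qnorm_def
proof (rule cInf_greatest)
  from assms obtain F where "sl F T" by (auto simp: MA_def)
  then show "(\<lambda>G. Lim U (\<lambda>i. onorm (G i))) ` cls T \<noteq> {}" by (auto simp: cls_def)
next
  fix y assume "y \<in> (\<lambda>G. Lim U (\<lambda>i. onorm (G i))) ` cls T"
  then obtain G where G: "sl G T" and y: "y = Lim U (\<lambda>i. onorm (G i))" by (auto simp: cls_def)
  note g = slD[OF G]
  obtain C where C: "\<And>i. onorm (G i) \<le> C" using g(2) unfolding bnd_def by blast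
  have Cabs: "\<bar>onorm (G i)\<bar> \<le> C" for i using C[of i] bop_onorm_nonneg[OF A_bop[OF g(1)]] by simp
  obtain l where l: "((\<lambda>i. onorm (G i)) \<longlongrightarrow> l) U" using ultra_lim[OF uf, of "\<lambda>i. onorm (G i)", OF Cabs] by blast
  then have yl: "y = l" using y U_ne by (simp add: tendsto_Lim)
  have gen: "((\<lambda>i. G i (a h)) \<longlongrightarrow> T (a h)) U" if a: "a \<in> A" for a h
  proof -
    have t: "((\<lambda>i. onorm (\<lambda>h. G i (a h) - T (a h))) \<longlongrightarrow> 0) U" using g(4) a by (simp add: SC_def)
    have "((\<lambda>i. G i (a h) - T (a h)) \<longlongrightarrow> 0) U"
    proof (rule Lim_null_comparison)
      show "eventually (\<lambda>i. norm (G i (a h) - T (a h)) \<le> onorm (\<lambda>h. G i (a h) - T (a h)) * norm h) U"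
        using bop_norm[OF bop_cd1[OF A_bop[OF g(1)] g(3) A_bop[OF a]]] by simp
      show "((\<lambda>i. onorm (\<lambda>h. G i (a h) - T (a h)) * norm h) \<longlongrightarrow> 0) U"
        by (rule tendsto_mult_left_zero[OF t])
    qed
    then show ?thesis by (simp add: LIM_zero_iff)
  qed
  have "onorm T \<le> l"
    by (rule onorm_le_lim[OF A_bop[OF g(1)] g(3) _ l]) (rule gen)
  then show "onorm T \<le> y" using yl by simp
qed

end


context ms
begin

lemma cls_A_eq: "qconst A U ` A = cls ` A"
  by (rule image_cong[OF refl qconst_cls])

lemma qzero_in: "qzero A U \<in> cls ` A"
  using qzero_cls A_zero by blast

lemma cls_zero_iff: "T \<in> MA \<Longrightarrow> cls T = qzero A U \<longleftrightarrow> T = (\<lambda>h. 0)"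
  using cls_inj qzero_cls by metis

lemma ideal_A: "q_ideal A U (cls ` A)"
  unfolding q_ideal_def
proof (intro conjI ballI allI)
  show "cls ` A \<subseteq> Q A U" using A_MA by (auto simp: Q_eq)
  show "qzero A U \<in> cls ` A" by (rule qzero_in)
next
  fix c d assume "c \<in> cls ` A" "d \<in> cls ` A"
  then obtain a b where a: "a \<in> A" "c = cls a" and b: "b \<in> A" "d = cls b" by blast
  show "qadd A U c d \<in> cls ` A"
    using a b qadd_cls[OF A_MA[OF a(1)] A_MA[OF b(1)]] A_add[OF a(1) b(1)] by auto
next
  fix z c assume "c \<in> cls ` A"
  then obtain a where a: "a \<in> A" "c = cls a" by blast
  show "qscale A U z c \<in> cls ` A"
    using a qscale_cls[OF A_MA[OF a(1)]] A_scale[OF a(1)] by auto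
next
  fix c d assume "c \<in> Q A U" "d \<in> cls ` A"
  then obtain T a where T: "T \<in> MA" "c = cls T" and a: "a \<in> A" "d = cls a" by (auto simp: Q_eq)
  show "qmul A U c d \<in> cls ` A"
    using T a qmul_cls[OF T(1) A_MA[OF a(1)]] MA_mult[OF T(1) a(1)] by auto
  show "qmul A U d c \<in> cls ` A"
    using T a qmul_cls[OF A_MA[OF a(1)] T(1)] MA_mult[OF T(1) a(1)] by auto
next
  show "qclosed A U (cls ` A)"
    unfolding qclosed_def
  proof (intro ballI impI)
    fix c assume c: "c \<in> Q A U"
      and app: "\<forall>\<epsilon>>0. \<exists>d\<in>cls ` A. qnorm A U (qadd A U c (qscale A U (-1) d)) < \<epsilon>"
    from c obtain T where T: "T \<in> MA" "c = cls T" by (auto simp: Q_eq)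
    have "T \<in> A"
    proof (rule A_closed[OF MA_bop[OF T(1)]])
      fix \<epsilon> :: real assume "\<epsilon> > 0"
      with app obtain a where a: "a \<in> A" and lt: "qnorm A U (qadd A U (cls T) (qscale A U (-1) (cls a))) < \<epsilon>"
        using T(2) by blast
      have ma: "(\<lambda>h. scaleC (-1) (a h)) \<in> MA" by (rule qscale_cls(2)[OF A_MA[OF a]])
      have eq: "qadd A U (cls T) (qscale A U (-1) (cls a)) = cls (\<lambda>h. T h - a h)"
        using qadd_cls(1)[OF T(1) ma] qscale_cls(1)[OF A_MA[OF a]] by (simp add: scaleC_minus_left scaleC_one)
      have mb: "(\<lambda>h. T h - a h) \<in> MA"
        using qadd_cls(2)[OF T(1) ma] by (simp add: scaleC_minus_left scaleC_one)
      have "onorm (\<lambda>h. T h - a h) < \<epsilon>" using qnorm_ge[OF mb] lt eq by simp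
      then show "\<exists>S\<in>A. onorm (\<lambda>x. T x - S x) < \<epsilon>" using a by blast
    qed
    then show "c \<in> cls ` A" using T(2) by blast
  qed
qed

lemma essential: "q_essential_ideal A U (qconst A U ` A)"
  unfolding q_essential_ideal_def cls_A_eq
proof (intro conjI allI impI ideal_A)
  fix S' assume h: "q_ideal A U S' \<and> S' \<noteq> {qzero A U}"
  then have sub: "S' \<subseteq> Q A U" and z: "qzero A U \<in> S'"
    and mul: "\<forall>c\<in>Q A U. \<forall>d\<in>S'. qmul A U c d \<in> S' \<and> qmul A U d c \<in> S'"
    by (auto simp: q_ideal_def)
  from h z obtain c where c: "c \<in> S'" "c \<noteq> qzero A U" by blast
  with sub obtain T where T: "T \<in> MA" "c = cls T" by (auto simp: Q_eq)
  have T0: "T \<noteq> (\<lambda>h. 0)" using c T cls_zero_iff by blast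
  have "\<exists>a\<in>A. (\<lambda>h. T (a h)) \<noteq> (\<lambda>h. 0)"
  proof (rule ccontr)
    assume "\<not> ?thesis"
    then have "\<And>a h. a \<in> A \<Longrightarrow> T (a h) = 0" by (metis (mono_tags))
    then have "T = (\<lambda>h. 0)" by (rule nd_zero[OF MA_bop[OF T(1)]])
    with T0 show False by simp
  qed
  then obtain a where a: "a \<in> A" "(\<lambda>h. T (a h)) \<noteq> (\<lambda>h. 0)" by blast
  have "qmul A U c (cls a) \<in> S'" using mul c(1) A_MA[OF a(1)] by (auto simp: Q_eq)
  moreover have qm: "qmul A U c (cls a) = cls (\<lambda>h. T (a h))" using qmul_cls[OF T(1) A_MA[OF a(1)]] T(2) by simp
  moreover have "(\<lambda>h. T (a h)) \<in> A" using MA_mult[OF T(1) a(1)] by simp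
  moreover have "cls (\<lambda>h. T (a h)) \<noteq> qzero A U"
    using cls_zero_iff[OF A_MA[OF \<open>(\<lambda>h. T (a h)) \<in> A\<close>]] a(2) by simp
  ultimately show "cls ` A \<inter> S' \<noteq> {qzero A U}" by blast
qed

end


context ms
begin

definition dA :: "('h \<Rightarrow> 'h) \<Rightarrow> ('h \<Rightarrow> 'h) \<Rightarrow> real" where
  "dA S T = \<bar>onorm (\<lambda>x. S x - T x)\<bar>"

lemma dA_A: "S \<in> A \<Longrightarrow> T \<in> A \<Longrightarrow> dA S T = onorm (\<lambda>x. S x - T x)"
  unfolding dA_def using bop_onorm_nonneg[OF bop_diff[OF A_bop A_bop]] by simp

lemma dA_metric: "Metric_space A dA"
proof
  show "0 \<le> dA x y" for x y by (simp add: dA_def)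
  show "dA x y = dA y x" for x y by (simp only: dA_def onorm_diff_sym[of x y])
  show "dA x y = 0 \<longleftrightarrow> x = y" if "x \<in> A" "y \<in> A" for x y
  proof -
    have "dA x y = 0 \<longleftrightarrow> (\<lambda>h. x h - y h) = (\<lambda>h. 0)"
      using that by (simp add: dA_A onorm_eq_zero_iff[OF bop_diff[OF A_bop A_bop]])
    also have "\<dots> \<longleftrightarrow> x = y"
    proof
      assume h: "(\<lambda>h. x h - y h) = (\<lambda>h. 0)"
      show "x = y"
      proof
        fix h show "x h = y h" using fun_cong[OF h, of h] by simp
      qed
    qed simp
    finally show ?thesis .
  qed
  show "dA x z \<le> dA x y + dA y z" if "x \<in> A" "y \<in> A" "z \<in> A" for x y z
    using that by (simp add: dA_A onorm_diff_tri A_bop)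
qed

interpretation MA_space: Metric_space A dA by (rule dA_metric)

lemma A_mcomplete: "MA_space.mcomplete"
  unfolding MA_space.mcomplete_def
proof (intro allI impI)
  fix \<sigma> :: "nat \<Rightarrow> 'h \<Rightarrow> 'h" assume C: "MA_space.MCauchy \<sigma>"
  have \<sigma>A: "\<sigma> n \<in> A" for n using C by (auto simp: MA_space.MCauchy_def)
  have b\<sigma>: "bop (\<sigma> n)" for n by (rule A_bop[OF \<sigma>A])
  have cau: "\<exists>N. \<forall>n n'. N \<le> n \<longrightarrow> N \<le> n' \<longrightarrow> onorm (\<lambda>x. \<sigma> n x - \<sigma> n' x) < \<epsilon>" if "\<epsilon> > 0" for \<epsilon>
    using C that by (auto simp: MA_space.MCauchy_def dA_A[OF \<sigma>A \<sigma>A])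
  have pt: "norm (\<sigma> n v - \<sigma> n' v) \<le> onorm (\<lambda>x. \<sigma> n x - \<sigma> n' x) * norm v" for n n' v
    using bop_norm[OF bop_diff[OF b\<sigma>[of n] b\<sigma>[of n']], of v] by simp
  have conv: "convergent (\<lambda>n. \<sigma> n v)" for v
  proof -
    have "Cauchy (\<lambda>n. \<sigma> n v)"
    proof (rule metric_CauchyI)
      fix e :: real assume e: "e > 0"
      have pos: "0 < e / (norm v + 1)" using e by (intro divide_pos_pos) (auto intro: add_nonneg_pos)
      obtain N where N: "\<And>n n'. N \<le> n \<Longrightarrow> N \<le> n' \<Longrightarrow> onorm (\<lambda>x. \<sigma> n x - \<sigma> n' x) < e / (norm v + 1)"
        using cau[OF pos] by blast
      show "\<exists>M. \<forall>m\<ge>M. \<forall>n\<ge>M. dist (\<sigma> m v) (\<sigma> n v) < e"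
      proof (intro exI allI impI)
        fix m n assume "m \<ge> N" "n \<ge> N"
        have "dist (\<sigma> m v) (\<sigma> n v) \<le> onorm (\<lambda>x. \<sigma> m x - \<sigma> n x) * norm v" using pt by (simp add: dist_norm)
        also have "\<dots> \<le> e / (norm v + 1) * norm v"
          using N[OF \<open>m \<ge> N\<close> \<open>n \<ge> N\<close>] by (intro mult_right_mono) auto
        also have "\<dots> < e"
        proof -
          have d: "0 < 1 + norm v" by (simp add: add_pos_nonneg)
          have "e * norm v < e * (1 + norm v)" using e by simp
          then show ?thesis using d by (simp add: field_simps)
        qed
        finally show "dist (\<sigma> m v) (\<sigma> n v) < e" .
      qed
    qed
    then show ?thesis by (simp add: Cauchy_convergent_iff)
  qed
  define T where "T v = lim (\<lambda>n. \<sigma> n v)" for v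
  have lim: "(\<lambda>n. \<sigma> n v) \<longlonglongrightarrow> T v" for v unfolding T_def using conv[of v] by (simp add: convergent_LIMSEQ_iff)
  have est: "norm (T v - \<sigma> n v) \<le> \<epsilon> * norm v"
    if "\<forall>m m'. N \<le> m \<longrightarrow> N \<le> m' \<longrightarrow> onorm (\<lambda>x. \<sigma> m x - \<sigma> m' x) < \<epsilon>" "n \<ge> N" for \<epsilon> N n v
  proof (rule Lim_norm_ubound[OF trivial_limit_sequentially])
    show "(\<lambda>m. \<sigma> m v - \<sigma> n v) \<longlonglongrightarrow> T v - \<sigma> n v" by (intro tendsto_intros lim)
    show "eventually (\<lambda>m. norm (\<sigma> m v - \<sigma> n v) \<le> \<epsilon> * norm v) sequentially"
      unfolding eventually_sequentially
    proof (intro exI allI impI)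
      fix m assume "m \<ge> N"
      have "norm (\<sigma> m v - \<sigma> n v) \<le> onorm (\<lambda>x. \<sigma> m x - \<sigma> n x) * norm v" by (rule pt)
      also have "\<dots> \<le> \<epsilon> * norm v" using that(1)[rule_format, OF \<open>m \<ge> N\<close> \<open>n \<ge> N\<close>] by (intro mult_right_mono) auto
      finally show "norm (\<sigma> m v - \<sigma> n v) \<le> \<epsilon> * norm v" .
    qed
  qed
  have Tadd: "T (x + y) = T x + T y" for x y
  proof -
    have "(\<lambda>n. \<sigma> n (x + y)) \<longlonglongrightarrow> T x + T y"
      using tendsto_add[OF lim[of x] lim[of y]] by (simp add: bop_add_apply[OF b\<sigma>])
    then show ?thesis using lim[of "x + y"] LIMSEQ_unique by blast
  qed
  have Tsc: "T (scaleC c x) = scaleC c (T x)" for c x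
  proof -
    have "(\<lambda>n. scaleC c (\<sigma> n x)) \<longlonglongrightarrow> scaleC c (T x)"
      by (rule bounded_linear.tendsto[OF scaleC_bounded_linear lim])
    then have "(\<lambda>n. \<sigma> n (scaleC c x)) \<longlonglongrightarrow> scaleC c (T x)" by (simp add: bopD(2)[OF b\<sigma>])
    then show ?thesis using lim[of "scaleC c x"] LIMSEQ_unique by blast
  qed
  obtain N1 where N1: "\<And>n n'. N1 \<le> n \<Longrightarrow> N1 \<le> n' \<Longrightarrow> onorm (\<lambda>x. \<sigma> n x - \<sigma> n' x) < 1"
    using cau[of 1] by auto
  have Tbd: "norm (T v) \<le> norm v * (1 + onorm (\<sigma> N1))" for v
  proof -
    have "norm (T v) \<le> norm (T v - \<sigma> N1 v) + norm (\<sigma> N1 v)" using norm_triangle_ineq[of "T v - \<sigma> N1 v" "\<sigma> N1 v"] by simp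
    also have "\<dots> \<le> 1 * norm v + onorm (\<sigma> N1) * norm v"
    proof (rule add_mono)
      show "norm (T v - \<sigma> N1 v) \<le> 1 * norm v" by (rule est[OF _ order_refl]) (use N1 in blast)
      show "norm (\<sigma> N1 v) \<le> onorm (\<sigma> N1) * norm v" by (rule bop_norm[OF b\<sigma>])
    qed
    finally show ?thesis by (simp add: algebra_simps)
  qed
  have bT: "bop T"
    unfolding bop_def
  proof (intro conjI allI bounded_linear_intro[where K="1 + onorm (\<sigma> N1)"])
    show "T (x + y) = T x + T y" for x y by (rule Tadd)
    show "T (r *\<^sub>R x) = r *\<^sub>R T x" for r x by (simp add: scaleR_scaleC Tsc)
    show "norm (T x) \<le> norm x * (1 + onorm (\<sigma> N1))" for x by (rule Tbd)
    show "T (scaleC c x) = scaleC c (T x)" for c x by (rule Tsc)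
  qed
  have close: "onorm (\<lambda>x. T x - \<sigma> n x) \<le> \<epsilon>"
    if "\<forall>m m'. N \<le> m \<longrightarrow> N \<le> m' \<longrightarrow> onorm (\<lambda>x. \<sigma> m x - \<sigma> m' x) < \<epsilon>" "n \<ge> N" "\<epsilon> > 0" for \<epsilon> N n
    by (rule onorm_bound) (use that est in auto)
  have TA: "T \<in> A"
  proof (rule A_closed[OF bT])
    fix \<epsilon> :: real assume e: "\<epsilon> > 0"
    obtain N where N: "\<And>n n'. N \<le> n \<Longrightarrow> N \<le> n' \<Longrightarrow> onorm (\<lambda>x. \<sigma> n x - \<sigma> n' x) < \<epsilon> / 2"
      using cau[of "\<epsilon>/2"] e by auto
    have "onorm (\<lambda>x. T x - \<sigma> N x) \<le> \<epsilon> / 2" by (rule close) (use e N in auto)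
    then show "\<exists>S\<in>A. onorm (\<lambda>x. T x - S x) < \<epsilon>" using \<sigma>A e by (intro bexI[of _ "\<sigma> N"]) auto
  qed
  show "\<exists>x. limitin MA_space.mtopology \<sigma> x sequentially"
    unfolding MA_space.limit_metric_sequentially
  proof (rule exI[of _ T], rule conjI[OF TA], intro allI impI)
    fix \<epsilon> :: real assume e: "\<epsilon> > 0"
    obtain N where N: "\<And>n n'. N \<le> n \<Longrightarrow> N \<le> n' \<Longrightarrow> onorm (\<lambda>x. \<sigma> n x - \<sigma> n' x) < \<epsilon> / 2"
      using cau[of "\<epsilon>/2"] e by auto
    show "\<exists>N. \<forall>n\<ge>N. \<sigma> n \<in> A \<and> dA (\<sigma> n) T < \<epsilon>"
    proof (intro exI allI impI conjI)
      fix n assume n: "n \<ge> N"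
      show "\<sigma> n \<in> A" by (rule \<sigma>A)
      have "onorm (\<lambda>x. T x - \<sigma> n x) \<le> \<epsilon> / 2" by (rule close) (use e N n in auto)
      then show "dA (\<sigma> n) T < \<epsilon>" using e by (simp add: dA_A[OF \<sigma>A TA] onorm_diff_sym[of "\<sigma> n"])
    qed
  qed
qed


lemma onorm_diff_le: "bop S \<Longrightarrow> bop T \<Longrightarrow> onorm (\<lambda>x. S x - T x) \<le> onorm S + onorm T"
  using onorm_diff_tri[of S "\<lambda>x. 0" T] by (simp add: bop_zero onorm_neg)

lemma banach_steinhaus:
  assumes W: "\<And>w. w \<in> W \<Longrightarrow> bop w"
    and pw: "\<And>a. a \<in> A \<Longrightarrow> \<exists>M. \<forall>w\<in>W. onorm (\<lambda>h. w (a h)) \<le> M"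
  shows "\<exists>K. \<forall>w\<in>W. \<forall>a\<in>A. onorm (\<lambda>h. w (a h)) \<le> K * onorm a"
proof -
  define E where "E n = {a \<in> A. \<forall>w\<in>W. onorm (\<lambda>h. w (a h)) \<le> real n}" for n :: nat
  have Esub: "E n \<subseteq> A" for n by (auto simp: E_def)
  have Eclosed: "closedin MA_space.mtopology (E n)" for n
    unfolding MA_space.metric_closedin_iff_sequentially_closed
  proof (intro conjI allI impI Esub)
    fix \<sigma> l assume h: "range \<sigma> \<subseteq> E n \<and> limitin MA_space.mtopology \<sigma> l sequentially"
    then have \<sigma>E: "\<sigma> k \<in> E n" for k by auto
    have \<sigma>A: "\<sigma> k \<in> A" for k using \<sigma>E Esub by auto
    from h have lA: "l \<in> A" and lim: "\<And>\<epsilon>. \<epsilon> > 0 \<Longrightarrow> \<exists>N. \<forall>k\<ge>N. \<sigma> k \<in> A \<and> dA (\<sigma> k) l < \<epsilon>"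
      unfolding MA_space.limit_metric_sequentially by auto
    have "onorm (\<lambda>h. w (l h)) \<le> real n" if w: "w \<in> W" for w
    proof (rule ccontr)
      assume "\<not> ?thesis"
      then have gt: "onorm (\<lambda>h. w (l h)) > real n" by simp
      have bw: "bop w" by (rule W[OF w])
      define \<epsilon> where "\<epsilon> = (onorm (\<lambda>h. w (l h)) - real n) / (onorm w + 1)"
      have w0: "0 \<le> onorm w" by (rule bop_onorm_nonneg[OF bw])
      have \<epsilon>0: "\<epsilon> > 0" unfolding \<epsilon>_def using gt w0 by (intro divide_pos_pos) auto
      obtain k where k: "dA (\<sigma> k) l < \<epsilon>" using lim[OF \<epsilon>0] by blast
      have bl: "bop l" and bk: "bop (\<sigma> k)" by (simp_all add: A_bop lA \<sigma>A)
      have "onorm (\<lambda>h. w (l h)) = onorm (\<lambda>h. w (\<sigma> k h) + w (l h - \<sigma> k h))"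
        by (simp add: bop_diff_apply[OF bw])
      also have "\<dots> \<le> onorm (\<lambda>h. w (\<sigma> k h)) + onorm (\<lambda>h. w (l h - \<sigma> k h))"
        by (rule onorm_add_le[OF bop_comp'[OF bw bk] bop_comp'[OF bw bop_diff[OF bl bk]]])
      also have "onorm (\<lambda>h. w (l h - \<sigma> k h)) \<le> onorm w * onorm (\<lambda>h. l h - \<sigma> k h)"
        by (rule onorm_comp_le[OF bw bop_diff[OF bl bk]])
      also have "onorm (\<lambda>h. l h - \<sigma> k h) = dA (\<sigma> k) l"
        by (simp add: dA_A[OF \<sigma>A lA] onorm_diff_sym[of l])
      finally have "onorm (\<lambda>h. w (l h)) \<le> onorm (\<lambda>h. w (\<sigma> k h)) + onorm w * dA (\<sigma> k) l"
        by simp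
      moreover have "onorm (\<lambda>h. w (\<sigma> k h)) \<le> real n" using \<sigma>E[of k] w by (auto simp: E_def)
      moreover have "onorm w * dA (\<sigma> k) l \<le> onorm w * \<epsilon>" using k w0 by (intro mult_left_mono) auto
      moreover have "onorm w * \<epsilon> < (onorm w + 1) * \<epsilon>" using \<epsilon>0 by simp
      moreover have "(onorm w + 1) * \<epsilon> = onorm (\<lambda>h. w (l h)) - real n"
        unfolding \<epsilon>_def using w0 by (simp add: field_simps)
      ultimately show False by linarith
    qed
    then show "l \<in> E n" using lA by (simp add: E_def)
  qed
  have union: "\<Union>(range E) = A"
  proof
    show "\<Union>(range E) \<subseteq> A" using Esub by blast
    show "A \<subseteq> \<Union>(range E)"
    proof
      fix a assume a: "a \<in> A"
      obtain M where M: "\<forall>w\<in>W. onorm (\<lambda>h. w (a h)) \<le> M" using pw[OF a] by blast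
      obtain n :: nat where n: "M \<le> real n" using real_arch_simple by blast
      have "a \<in> E n" using a M n by (auto simp: E_def intro: order_trans)
      then show "a \<in> \<Union>(range E)" by blast
    qed
  qed
  have "\<exists>n. MA_space.mtopology interior_of (E n) \<noteq> {}"
  proof (rule ccontr)
    assume "\<not> ?thesis"
    then have "MA_space.mtopology interior_of \<Union>(range E) = {}"
      by (intro MA_space.metric_Baire_category_alt[OF A_mcomplete]) (auto simp: Eclosed)
    then have i1: "MA_space.mtopology interior_of A = {}" by (simp only: union)
    have i2: "MA_space.mtopology interior_of A = A"
      using interior_of_topspace[of MA_space.mtopology] unfolding MA_space.topspace_mtopology .
    have "A = {}" by (rule trans[OF i2[symmetric] i1])
    then show False using A_zero by simp
  qed
  then obtain n a0 where a0: "a0 \<in> MA_space.mtopology interior_of (E n)" by blast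
  have op: "openin MA_space.mtopology (MA_space.mtopology interior_of (E n))" by (rule openin_interior_of)
  have "\<forall>x. x \<in> MA_space.mtopology interior_of (E n) \<longrightarrow> (\<exists>r>0. MA_space.mball x r \<subseteq> MA_space.mtopology interior_of (E n))"
    using op unfolding MA_space.openin_mtopology by (rule conjunct2)
  then obtain r where r: "r > 0" "MA_space.mball a0 r \<subseteq> MA_space.mtopology interior_of (E n)"
    using a0 by blast
  have rE: "MA_space.mball a0 r \<subseteq> E n" using r(2) interior_of_subset[of MA_space.mtopology "E n"] by (rule order_trans)
  have a0A: "a0 \<in> A" using a0 interior_of_subset[of MA_space.mtopology "E n"] Esub[of n] by blast
  have "a0 \<in> MA_space.mball a0 r" using a0A r(1) by (simp add: MA_space.in_mball dA_A onorm_zero)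
  then have a0E: "a0 \<in> E n" using rE by blast
  have small: "onorm (\<lambda>h. w (a h)) \<le> 2 * real n" if w: "w \<in> W" and a: "a \<in> A" "onorm a < r" for w a
  proof -
    have bw: "bop w" by (rule W[OF w])
    have ba: "bop a" and b0: "bop a0" by (simp_all add: A_bop a a0A)
    have sA: "(\<lambda>h. a0 h + a h) \<in> A" by (rule A_add[OF a0A a(1)])
    have "dA a0 (\<lambda>h. a0 h + a h) = onorm a"
      using onorm_neg[of a] by (simp add: dA_A[OF a0A sA])
    then have "(\<lambda>h. a0 h + a h) \<in> E n" using rE a0A sA a(2) by auto
    then have s1: "onorm (\<lambda>h. w (a0 h + a h)) \<le> real n" using w by (simp add: E_def)
    have s2: "onorm (\<lambda>h. w (a0 h)) \<le> real n" using a0E w by (simp add: E_def)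
    have "(\<lambda>h. w (a h)) = (\<lambda>h. w (a0 h + a h) - w (a0 h))" by (simp add: bop_add_apply[OF bw])
    then have "onorm (\<lambda>h. w (a h)) \<le> onorm (\<lambda>h. w (a0 h + a h)) + onorm (\<lambda>h. w (a0 h))"
      using onorm_diff_le[OF bop_comp'[OF bw bop_add[OF b0 ba]] bop_comp'[OF bw b0]] by simp
    then show ?thesis using s1 s2 by simp
  qed
  show ?thesis
  proof (intro exI ballI)
    fix w a assume w: "w \<in> W" and a: "a \<in> A"
    have bw: "bop w" by (rule W[OF w])
    have ba: "bop a" by (rule A_bop[OF a])
    show "onorm (\<lambda>h. w (a h)) \<le> (4 * real n / r) * onorm a"
    proof (cases "onorm a = 0")
      case True
      then have "a = (\<lambda>x. 0)" by (simp add: onorm_eq_zero_iff[OF ba])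
      then show ?thesis using bop_zero_apply[OF bw] by (simp add: onorm_zero)
    next
      case False
      then have na: "onorm a > 0" using bop_onorm_nonneg[OF ba] by simp
      define c where "c = r / (2 * onorm a)"
      have c0: "c > 0" unfolding c_def using na r(1) by simp
      have a'A: "(\<lambda>h. c *\<^sub>R a h) \<in> A" by (rule A_scaleR[OF a])
      have "onorm (\<lambda>h. c *\<^sub>R a h) = c * onorm a"
        using onorm_scaleR[OF bopD(1)[OF ba], of c] c0 by simp
      also have "\<dots> = r / 2" unfolding c_def using na by simp
      finally have "onorm (\<lambda>h. c *\<^sub>R a h) < r" using r(1) by simp
      then have "onorm (\<lambda>h. w (c *\<^sub>R a h)) \<le> 2 * real n" by (rule small[OF w a'A])
      moreover have "onorm (\<lambda>h. w (c *\<^sub>R a h)) = c * onorm (\<lambda>h. w (a h))"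
        using onorm_scaleR[OF bopD(1)[OF bop_comp'[OF bw ba]], of c] c0 by (simp add: bop_scaleR_apply[OF bw])
      ultimately have "c * onorm (\<lambda>h. w (a h)) \<le> 2 * real n" by simp
      then have "onorm (\<lambda>h. w (a h)) \<le> 2 * real n / c" using c0 by (simp add: field_simps)
      also have "2 * real n / c = (4 * real n / r) * onorm a" unfolding c_def using na r(1) by (simp add: field_simps)
      finally show ?thesis .
    qed
  qed
qed

end


locale ms_emb = ms A le e U for A :: "('h::chilbert_space \<Rightarrow> 'h) set" and le :: "'i \<Rightarrow> 'i \<Rightarrow> bool" and e U +
  fixes \<iota> :: "('h \<Rightarrow> 'h) \<Rightarrow> 'b::cstar_algebra"
  assumes emb: "ideal_embedding A \<iota>"
begin

lemma \<iota>_inj: "a \<in> A \<Longrightarrow> b \<in> A \<Longrightarrow> \<iota> a = \<iota> b \<Longrightarrow> a = b"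
  using emb by (auto simp: ideal_embedding_def dest: inj_onD)

lemma \<iota>_add: "a \<in> A \<Longrightarrow> b \<in> A \<Longrightarrow> \<iota> (\<lambda>x. a x + b x) = \<iota> a + \<iota> b"
  using emb by (simp add: ideal_embedding_def)

lemma \<iota>_mul: "a \<in> A \<Longrightarrow> b \<in> A \<Longrightarrow> \<iota> (\<lambda>x. a (b x)) = \<iota> a * \<iota> b"
  using emb unfolding ideal_embedding_def comp_def by blast

lemma \<iota>_scale: "a \<in> A \<Longrightarrow> \<iota> (\<lambda>x. scaleC z (a x)) = scaleC z (\<iota> a)"
  using emb by (simp add: ideal_embedding_def)

lemma \<iota>_adj: "a \<in> A \<Longrightarrow> \<iota> (adj a) = cstar (\<iota> a)"
  using emb by (simp add: ideal_embedding_def)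

lemma \<iota>_idl: "a \<in> A \<Longrightarrow> y * \<iota> a \<in> \<iota> ` A" "a \<in> A \<Longrightarrow> \<iota> a * y \<in> \<iota> ` A"
  using emb by (simp_all add: ideal_embedding_def)

lemma \<iota>_diff: "a \<in> A \<Longrightarrow> b \<in> A \<Longrightarrow> \<iota> (\<lambda>x. a x - b x) = \<iota> a - \<iota> b"
proof -
  assume a: "a \<in> A" and b: "b \<in> A"
  have "\<iota> (\<lambda>x. a x + scaleC (-1) (b x)) = \<iota> a + scaleC (-1) (\<iota> b)"
    by (simp add: \<iota>_add[OF a A_scale[OF b]] \<iota>_scale[OF b])
  then show ?thesis by (simp add: scaleC_minus_left scaleC_one)
qed

definition L :: "'b \<Rightarrow> ('h \<Rightarrow> 'h) \<Rightarrow> ('h \<Rightarrow> 'h)" where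
  "L b a = inv_into A \<iota> (b * \<iota> a)"

definition R :: "'b \<Rightarrow> ('h \<Rightarrow> 'h) \<Rightarrow> ('h \<Rightarrow> 'h)" where
  "R b a = inv_into A \<iota> (\<iota> a * b)"

lemma L_A: assumes "a \<in> A" shows "L b a \<in> A" "\<iota> (L b a) = b * \<iota> a"
  unfolding L_def using \<iota>_idl(1)[OF assms, of b] by (simp_all add: inv_into_into f_inv_into_f)

lemma R_A: assumes "a \<in> A" shows "R b a \<in> A" "\<iota> (R b a) = \<iota> a * b"
  unfolding R_def using \<iota>_idl(2)[OF assms, of b] by (simp_all add: inv_into_into f_inv_into_f)

lemma L_comp: assumes "a \<in> A" "a' \<in> A" shows "L b (\<lambda>x. a (a' x)) = (\<lambda>x. L b a (a' x))"
proof (rule \<iota>_inj)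
  show "L b (\<lambda>x. a (a' x)) \<in> A" by (rule L_A(1)[OF A_comp[OF assms]])
  show "(\<lambda>x. L b a (a' x)) \<in> A" by (rule A_comp[OF L_A(1)[OF assms(1)] assms(2)])
  show "\<iota> (L b (\<lambda>x. a (a' x))) = \<iota> (\<lambda>x. L b a (a' x))"
    by (simp add: L_A(2)[OF A_comp[OF assms]] \<iota>_mul[OF assms] \<iota>_mul[OF L_A(1)[OF assms(1)] assms(2)] L_A(2)[OF assms(1)] mult.assoc)
qed

lemma xL_eq: assumes "x \<in> A" "a \<in> A" shows "(\<lambda>h. x (L b a h)) = (\<lambda>h. R b x (a h))"
proof (rule \<iota>_inj)
  show "(\<lambda>h. x (L b a h)) \<in> A" by (rule A_comp[OF assms(1) L_A(1)[OF assms(2)]])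
  show "(\<lambda>h. R b x (a h)) \<in> A" by (rule A_comp[OF R_A(1)[OF assms(1)] assms(2)])
  show "\<iota> (\<lambda>h. x (L b a h)) = \<iota> (\<lambda>h. R b x (a h))"
    by (simp add: \<iota>_mul[OF assms(1) L_A(1)[OF assms(2)]] \<iota>_mul[OF R_A(1)[OF assms(1)] assms(2)]
        L_A(2)[OF assms(2)] R_A(2)[OF assms(1)] mult.assoc)
qed

lemma L_diff: assumes "a \<in> A" "a' \<in> A" shows "L b (\<lambda>x. a x - a' x) = (\<lambda>x. L b a x - L b a' x)"
proof (rule \<iota>_inj)
  show "L b (\<lambda>x. a x - a' x) \<in> A" by (rule L_A(1)[OF A_diff[OF assms]])
  show "(\<lambda>x. L b a x - L b a' x) \<in> A" by (rule A_diff[OF L_A(1)[OF assms(1)] L_A(1)[OF assms(2)]])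
  show "\<iota> (L b (\<lambda>x. a x - a' x)) = \<iota> (\<lambda>x. L b a x - L b a' x)"
    by (simp add: L_A(2)[OF A_diff[OF assms]] \<iota>_diff[OF assms] \<iota>_diff[OF L_A(1)[OF assms(1)] L_A(1)[OF assms(2)]]
        L_A(2)[OF assms(1)] L_A(2)[OF assms(2)] right_diff_distrib)
qed

lemma L_add_b: assumes "a \<in> A" shows "L (b + b') a = (\<lambda>x. L b a x + L b' a x)"
proof (rule \<iota>_inj)
  show "L (b + b') a \<in> A" by (rule L_A(1)[OF assms])
  show "(\<lambda>x. L b a x + L b' a x) \<in> A" by (rule A_add[OF L_A(1)[OF assms] L_A(1)[OF assms]])
  show "\<iota> (L (b + b') a) = \<iota> (\<lambda>x. L b a x + L b' a x)"
    by (simp add: L_A(2)[OF assms] \<iota>_add[OF L_A(1)[OF assms] L_A(1)[OF assms]] distrib_right)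
qed

lemma L_mult_b: assumes "a \<in> A" shows "L (b * b') a = L b (L b' a)"
proof (rule \<iota>_inj)
  show "L (b * b') a \<in> A" by (rule L_A(1)[OF assms])
  show "L b (L b' a) \<in> A" by (rule L_A(1)[OF L_A(1)[OF assms]])
  show "\<iota> (L (b * b') a) = \<iota> (L b (L b' a))"
    by (simp add: L_A(2)[OF assms] L_A(2)[OF L_A(1)[OF assms]] mult.assoc)
qed

lemma L_scale_b: assumes "a \<in> A" shows "L (scaleC z b) a = (\<lambda>x. scaleC z (L b a x))"
proof (rule \<iota>_inj)
  show "L (scaleC z b) a \<in> A" by (rule L_A(1)[OF assms])
  show "(\<lambda>x. scaleC z (L b a x)) \<in> A" by (rule A_scale[OF L_A(1)[OF assms]])
  show "\<iota> (L (scaleC z b) a) = \<iota> (\<lambda>x. scaleC z (L b a x))"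
    by (simp add: L_A(2)[OF assms] \<iota>_scale[OF L_A(1)[OF assms]] scaleC_mult_left)
qed

lemma L_\<iota>: assumes "x \<in> A" "a \<in> A" shows "L (\<iota> x) a = (\<lambda>h. x (a h))"
proof (rule \<iota>_inj)
  show "L (\<iota> x) a \<in> A" by (rule L_A(1)[OF assms(2)])
  show "(\<lambda>h. x (a h)) \<in> A" by (rule A_comp[OF assms])
  show "\<iota> (L (\<iota> x) a) = \<iota> (\<lambda>h. x (a h))"
    by (simp add: L_A(2)[OF assms(2)] \<iota>_mul[OF assms])
qed

lemma adj_R: assumes "a \<in> A" shows "adj (R b a) = L (cstar b) (adj a)"
proof (rule \<iota>_inj)
  show "adj (R b a) \<in> A" by (rule A_adj[OF R_A(1)[OF assms]])
  show "L (cstar b) (adj a) \<in> A" by (rule L_A(1)[OF A_adj[OF assms]])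
  show "\<iota> (adj (R b a)) = \<iota> (L (cstar b) (adj a))"
    by (simp add: \<iota>_adj[OF R_A(1)[OF assms]] R_A(2)[OF assms] L_A(2)[OF A_adj[OF assms]] \<iota>_adj[OF assms] cstar_mult)
qed

end


context ms_emb
begin

lemma e_bound: "\<exists>C1>0. \<forall>i. onorm (e i) \<le> C1"
proof -
  obtain C where C: "\<forall>i. onorm (e i) \<le> C" using ebd by blast
  have "\<forall>i. onorm (e i) \<le> max C 1" using C by (auto intro: le_max_iff_disj[THEN iffD2])
  then show ?thesis by (intro exI[of _ "max C 1"]) simp
qed

lemma L_bounded: "\<exists>K\<ge>0. \<forall>a\<in>A. onorm (L b a) \<le> K * onorm a"
proof -
  define W where "W = {R b x |x. x \<in> A \<and> onorm x \<le> 1}"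
  have W: "bop w" if "w \<in> W" for w using that R_A(1) A_bop by (auto simp: W_def)
  have pw: "\<exists>M. \<forall>w\<in>W. onorm (\<lambda>h. w (a h)) \<le> M" if a: "a \<in> A" for a
  proof (intro exI ballI)
    fix w assume "w \<in> W"
    then obtain x where x: "x \<in> A" "onorm x \<le> 1" "w = R b x" by (auto simp: W_def)
    have "onorm (\<lambda>h. w (a h)) = onorm (\<lambda>h. x (L b a h))" using xL_eq[OF x(1) a] x(3) by simp
    also have "\<dots> \<le> onorm x * onorm (L b a)" by (rule onorm_comp_le[OF A_bop[OF x(1)] A_bop[OF L_A(1)[OF a]]])
    also have "\<dots> \<le> 1 * onorm (L b a)"
      by (rule mult_right_mono[OF x(2) bop_onorm_nonneg[OF A_bop[OF L_A(1)[OF a]]]])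
    finally show "onorm (\<lambda>h. w (a h)) \<le> onorm (L b a)" by simp
  qed
  obtain K0 where K0: "\<And>w a. w \<in> W \<Longrightarrow> a \<in> A \<Longrightarrow> onorm (\<lambda>h. w (a h)) \<le> K0 * onorm a"
    using banach_steinhaus[OF W pw] by blast
  obtain C1 where C1: "C1 > 0" "\<And>i. onorm (e i) \<le> C1" using e_bound by blast
  have main: "onorm (L b a) \<le> C1 * K0 * onorm a" if a: "a \<in> A" for a
  proof -
    define l where "l = L b a"
    have lA: "l \<in> A" unfolding l_def by (rule L_A(1)[OF a])
    have bl: "bop l" by (rule A_bop[OF lA])
    have ei: "onorm (\<lambda>h. e i (l h)) \<le> C1 * K0 * onorm a" for i
    proof -
      define x where "x = (\<lambda>h. (1 / C1) *\<^sub>R e i h)"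
      have xA: "x \<in> A" unfolding x_def by (rule A_scaleR[OF e_A])
      have "onorm x = (1 / C1) * onorm (e i)"
        unfolding x_def using onorm_scaleR[OF bopD(1)[OF A_bop[OF e_A]], of "1 / C1" i] C1(1) by simp
      also have "\<dots> \<le> 1" using C1 by (simp add: field_simps)
      finally have x1: "onorm x \<le> 1" .
      have "R b x \<in> W" using xA x1 by (auto simp: W_def)
      then have "onorm (\<lambda>h. R b x (a h)) \<le> K0 * onorm a" using K0 a by blast
      then have "onorm (\<lambda>h. x (l h)) \<le> K0 * onorm a" using xL_eq[OF xA a] by (simp add: l_def)
      moreover have "onorm (\<lambda>h. x (l h)) = (1 / C1) * onorm (\<lambda>h. e i (l h))"
        unfolding x_def using onorm_scaleR[OF bopD(1)[OF bop_comp'[OF A_bop[OF e_A] bl]], of "1 / C1"] C1(1) by simp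
      ultimately show ?thesis using C1(1) by (simp add: field_simps)
    qed
    show ?thesis
    proof (rule tendsto_le[OF U_ne])
      have "((\<lambda>i. C1 * K0 * onorm a + onorm (\<lambda>h. e i (l h) - l h)) \<longlongrightarrow> C1 * K0 * onorm a + 0) U"
        by (intro tendsto_add tendsto_const au_U(1)[OF lA])
      then show "((\<lambda>i. C1 * K0 * onorm a + onorm (\<lambda>h. e i (l h) - l h)) \<longlongrightarrow> C1 * K0 * onorm a) U"
        by simp
      show "((\<lambda>i. onorm (L b a)) \<longlongrightarrow> onorm (L b a)) U" by simp
      show "eventually (\<lambda>i. onorm (L b a) \<le> C1 * K0 * onorm a + onorm (\<lambda>h. e i (l h) - l h)) U"
      proof (rule always_eventually, rule allI)
        fix i
        have "l = (\<lambda>h. e i (l h) - (e i (l h) - l h))" by simp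
        then have "onorm l = onorm (\<lambda>h. e i (l h) - (e i (l h) - l h))" by simp
        also have "\<dots> \<le> onorm (\<lambda>h. e i (l h)) + onorm (\<lambda>h. e i (l h) - l h)"
          by (rule onorm_diff_le[OF bop_comp'[OF A_bop[OF e_A] bl] bop_diff[OF bop_comp'[OF A_bop[OF e_A] bl] bl]])
        finally show "onorm (L b a) \<le> C1 * K0 * onorm a + onorm (\<lambda>h. e i (l h) - l h)"
          using ei[of i] by (simp add: l_def)
      qed
    qed
  qed
  show ?thesis
  proof (intro exI conjI ballI)
    show "0 \<le> max 0 (C1 * K0)" by simp
    fix a assume a: "a \<in> A"
    have "C1 * K0 * onorm a \<le> max 0 (C1 * K0) * onorm a"
      by (rule mult_right_mono) (simp_all add: bop_onorm_nonneg[OF A_bop[OF a]])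
    then show "onorm (L b a) \<le> max 0 (C1 * K0) * onorm a" using main[OF a] by simp
  qed
qed

end


context ms_emb
begin

lemma U_nontriv: "\<not> trivial_limit U"
  using U_ne by (simp add: trivial_limit_def)

lemma mult_op: "\<exists>T. bop T \<and> (\<forall>a\<in>A. (\<lambda>h. T (a h)) = L b a)"
proof -
  obtain K where K: "K \<ge> 0" "\<And>a. a \<in> A \<Longrightarrow> onorm (L b a) \<le> K * onorm a" using L_bounded by blast
  obtain C1 where C1: "C1 > 0" "\<And>i. onorm (e i) \<le> C1" using e_bound by blast
  define F where "F i = L b (e i)" for i
  have FA: "F i \<in> A" for i unfolding F_def by (rule L_A(1)[OF e_A])
  have bF: "bop (F i)" for i by (rule A_bop[OF FA])
  define B where "B = K * C1"
  have B0: "B \<ge> 0" unfolding B_def using K(1) C1(1) by simp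
  have Fb: "onorm (F i) \<le> B" for i
  proof -
    have "onorm (F i) \<le> K * onorm (e i)" unfolding F_def by (rule K(2)[OF e_A])
    also have "\<dots> \<le> K * C1" by (rule mult_left_mono[OF C1(2) K(1)])
    finally show ?thesis by (simp add: B_def)
  qed
  have Fn: "norm (F i v) \<le> B * norm v" for i v
    using bop_norm[OF bF, of i v] mult_right_mono[OF Fb[of i] norm_ge_zero[of v]] by linarith
  have gen: "((\<lambda>i. F i (a h)) \<longlongrightarrow> L b a h) U" if a: "a \<in> A" for a h
  proof -
    have eq: "(\<lambda>h. F i (a h) - L b a h) = L b (\<lambda>h. e i (a h) - a h)" for i
      unfolding F_def using L_diff[OF A_comp[OF e_A a] a] L_comp[OF e_A a] by simp
    have "((\<lambda>i. F i (a h) - L b a h) \<longlongrightarrow> 0) U"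
    proof (rule Lim_null_comparison)
      show "eventually (\<lambda>i. norm (F i (a h) - L b a h) \<le> K * onorm (\<lambda>h. e i (a h) - a h) * norm h) U"
      proof (rule always_eventually, rule allI)
        fix i
        have "norm (F i (a h) - L b a h) \<le> onorm (\<lambda>h. F i (a h) - L b a h) * norm h"
          by (rule bop_norm[OF bop_diff[OF bop_comp'[OF bF A_bop[OF a]] A_bop[OF L_A(1)[OF a]]]])
        also have "onorm (\<lambda>h. F i (a h) - L b a h) \<le> K * onorm (\<lambda>h. e i (a h) - a h)"
          unfolding eq by (rule K(2)[OF A_diff[OF A_comp[OF e_A a] a]])
        finally show "norm (F i (a h) - L b a h) \<le> K * onorm (\<lambda>h. e i (a h) - a h) * norm h"
          by (simp add: mult_right_mono)
      qed
      show "((\<lambda>i. K * onorm (\<lambda>h. e i (a h) - a h) * norm h) \<longlongrightarrow> 0) U"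
        by (intro tendsto_mult_left_zero tendsto_mult_right_zero au_U(1)[OF a])
    qed
    then show ?thesis by (simp add: LIM_zero_iff)
  qed
  have spanconv: "\<exists>y. ((\<lambda>i. F i v) \<longlongrightarrow> y) U" if v: "v \<in> span {a x |a x. a \<in> A}" for v
  proof -
    let ?P = "{v. \<exists>y. ((\<lambda>i. F i v) \<longlongrightarrow> y) U}"
    have "subspace ?P"
      unfolding subspace_def
    proof (intro conjI ballI allI)
      show "0 \<in> ?P" using bF by (auto simp: bop_zero_apply)
      fix x y assume "x \<in> ?P" "y \<in> ?P"
      then obtain y1 y2 where "((\<lambda>i. F i x) \<longlongrightarrow> y1) U" "((\<lambda>i. F i y) \<longlongrightarrow> y2) U" by blast
      then have "((\<lambda>i. F i (x + y)) \<longlongrightarrow> y1 + y2) U" using bF by (simp add: bop_add_apply tendsto_add)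
      then show "x + y \<in> ?P" by blast
    next
      fix c x assume "x \<in> ?P"
      then obtain y1 where "((\<lambda>i. F i x) \<longlongrightarrow> y1) U" by blast
      then have "((\<lambda>i. F i (c *\<^sub>R x)) \<longlongrightarrow> c *\<^sub>R y1) U" using bF by (simp add: bop_scaleR_apply tendsto_scaleR)
      then show "c *\<^sub>R x \<in> ?P" by blast
    qed
    then have "span {a x |a x. a \<in> A} \<subseteq> ?P"
      by (intro span_minimal) (use gen in blast)
    then show ?thesis using v by auto
  qed
  have allconv: "\<exists>y. ((\<lambda>i. F i v) \<longlongrightarrow> y) U" for v
  proof -
    have "cauchy_filter (filtermap (\<lambda>i. F i v) U)"
      unfolding cauchy_filter_metric_filtermap
    proof (intro allI impI)
      fix \<epsilon> :: real assume \<epsilon>: "\<epsilon> > 0"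
      define \<delta> where "\<delta> = \<epsilon> / (4 * (B + 1))"
      have \<delta>0: "\<delta> > 0" unfolding \<delta>_def using \<epsilon> B0 by simp
      have "v \<in> closure (span {a x |a x. a \<in> A})" using nd by (simp add: nondegenerate_def)
      then obtain w where w: "w \<in> span {a x |a x. a \<in> A}" "dist w v < \<delta>"
        unfolding closure_approachable using \<delta>0 by blast
      obtain y where y: "((\<lambda>i. F i w) \<longlongrightarrow> y) U" using spanconv[OF w(1)] by blast
      have ev: "eventually (\<lambda>i. dist (F i w) y < \<epsilon> / 4) U"
      proof -
        have e4: "\<epsilon> / 4 > 0" using \<epsilon> by simp
        show ?thesis using tendsto_iff[THEN iffD1, OF y] e4 by blast
      qed
      have Bd: "B * \<delta> \<le> \<epsilon> / 4"
      proof -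
        have "B * \<delta> = \<epsilon> / 4 * (B / (B + 1))" unfolding \<delta>_def using B0 by (simp add: field_simps)
        also have "\<dots> \<le> \<epsilon> / 4 * 1" using B0 \<epsilon> by (intro mult_left_mono) auto
        finally show ?thesis by simp
      qed
      have near: "dist (F i v) (F i w) < \<epsilon> / 4" for i
      proof -
        have "dist (F i v) (F i w) = norm (F i (v - w))" by (simp add: dist_norm bop_diff_apply[OF bF])
        also have "\<dots> \<le> B * norm (v - w)" by (rule Fn)
        also have "\<dots> \<le> B * \<delta>"
          using w(2) B0 by (intro mult_left_mono) (auto simp: dist_norm norm_minus_commute)
        also have "\<dots> \<le> \<epsilon> / 4" by (rule Bd)
        finally have "dist (F i v) (F i w) \<le> \<epsilon> / 4" .
        moreover have "dist (F i v) (F i w) \<noteq> \<epsilon> / 4 \<or> B * norm (v - w) < \<epsilon> / 4"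
        proof (cases "B = 0")
          case True then show ?thesis using \<epsilon> by simp
        next
          case False
          then have "B * norm (v - w) < B * \<delta>"
            using w(2) B0 by (intro mult_strict_left_mono) (auto simp: dist_norm norm_minus_commute)
          then show ?thesis using Bd by simp
        qed
        ultimately show ?thesis
          using \<open>dist (F i v) (F i w) = norm (F i (v - w))\<close> Fn[of i "v - w"] by linarith
      qed
      show "\<exists>P. eventually P U \<and> (\<forall>i j. P i \<and> P j \<longrightarrow> dist (F i v) (F j v) < \<epsilon>)"
      proof (intro exI conjI allI impI)
        show "eventually (\<lambda>i. dist (F i w) y < \<epsilon> / 4) U" by (rule ev)
        fix i j assume ij: "dist (F i w) y < \<epsilon> / 4 \<and> dist (F j w) y < \<epsilon> / 4"
        have "dist (F i v) (F j v) \<le> dist (F i v) (F i w) + dist (F i w) y + dist (F j w) y + dist (F j v) (F j w)"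
          using dist_triangle[of "F i v" "F j v" "F i w"] dist_triangle[of "F i w" "F j v" y]
            dist_triangle[of y "F j v" "F j w"] dist_commute[of y "F j w"] dist_commute[of "F j w" "F j v"]
          by linarith
        then show "dist (F i v) (F j v) < \<epsilon>" using near[of i] near[of j] ij by linarith
      qed
    qed
    moreover have "filtermap (\<lambda>i. F i v) U \<noteq> bot" using U_ne by (simp add: filtermap_bot_iff)
    ultimately obtain c where "filtermap (\<lambda>i. F i v) U \<le> nhds c"
      using cauchy_filter_complete_converges[OF _ complete_UNIV, of "filtermap (\<lambda>i. F i v) U"] by auto
    then show ?thesis by (auto simp: filterlim_def)
  qed
  define T where "T v = Lim U (\<lambda>i. F i v)" for v
  have Tlim: "((\<lambda>i. F i v) \<longlongrightarrow> T v) U" for v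
    using allconv[of v] tendsto_Lim[OF U_nontriv] unfolding T_def by metis
  have Tadd: "T (x + y) = T x + T y" for x y
  proof (rule tendsto_unique[OF U_ne Tlim])
    show "((\<lambda>i. F i (x + y)) \<longlongrightarrow> T x + T y) U"
      using tendsto_add[OF Tlim[of x] Tlim[of y]] by (simp add: bop_add_apply[OF bF])
  qed
  have Tsc: "T (scaleC c x) = scaleC c (T x)" for c x
  proof (rule tendsto_unique[OF U_ne Tlim])
    have "((\<lambda>i. scaleC c (F i x)) \<longlongrightarrow> scaleC c (T x)) U"
      by (rule bounded_linear.tendsto[OF scaleC_bounded_linear Tlim])
    then show "((\<lambda>i. F i (scaleC c x)) \<longlongrightarrow> scaleC c (T x)) U" by (simp add: bopD(2)[OF bF])
  qed
  have Tbd: "norm (T v) \<le> norm v * B" for v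
    using Lim_norm_ubound[OF U_nontriv Tlim, of v "B * norm v"] Fn by (simp add: mult.commute)
  have bT: "bop T"
    unfolding bop_def
  proof (intro conjI allI bounded_linear_intro[where K=B])
    show "T (x + y) = T x + T y" for x y by (rule Tadd)
    show "T (r *\<^sub>R x) = r *\<^sub>R T x" for r x by (simp add: scaleR_scaleC Tsc)
    show "norm (T x) \<le> norm x * B" for x by (rule Tbd)
    show "T (scaleC c x) = scaleC c (T x)" for c x by (rule Tsc)
  qed
  have "(\<lambda>h. T (a h)) = L b a" if a: "a \<in> A" for a
  proof
    fix h show "T (a h) = L b a h" by (rule tendsto_unique[OF U_ne Tlim gen[OF a]])
  qed
  then show ?thesis using bT by blast
qed

end


context ms_emb
begin

definition Tb :: "'b \<Rightarrow> 'h \<Rightarrow> 'h" where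
  "Tb b = (SOME T. bop T \<and> (\<forall>a\<in>A. (\<lambda>h. T (a h)) = L b a))"

lemma Tb: "bop (Tb b)" "a \<in> A \<Longrightarrow> (\<lambda>h. Tb b (a h)) = L b a"
proof -
  have "bop (Tb b) \<and> (\<forall>a\<in>A. (\<lambda>h. Tb b (a h)) = L b a)"
    unfolding Tb_def by (rule someI_ex[OF mult_op])
  then show "bop (Tb b)" "a \<in> A \<Longrightarrow> (\<lambda>h. Tb b (a h)) = L b a" by auto
qed

lemma Tb_app: "a \<in> A \<Longrightarrow> Tb b (a h) = L b a h"
  using fun_cong[OF Tb(2), of a b h] by simp

lemma Tb_unique: assumes "bop S" "\<And>a. a \<in> A \<Longrightarrow> (\<lambda>h. S (a h)) = L b a" shows "S = Tb b"
  by (rule nd_eq[OF assms(1) Tb(1)]) (simp add: assms(2) Tb(2))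

lemma Tb_left: assumes x: "x \<in> A" shows "(\<lambda>h. x (Tb b h)) = R b x"
proof (rule nd_eq[OF bop_comp'[OF A_bop[OF x] Tb(1)] A_bop[OF R_A(1)[OF x]]])
  fix a assume a: "a \<in> A"
  show "(\<lambda>h. x (Tb b (a h))) = (\<lambda>h. R b x (a h))"
    using xL_eq[OF x a] by (simp add: Tb_app[OF a])
qed

lemma sl_Tb: "sl (\<lambda>i. L b (e i)) (Tb b)"
proof -
  obtain K where K: "K \<ge> 0" "\<And>a. a \<in> A \<Longrightarrow> onorm (L b a) \<le> K * onorm a" using L_bounded by blast
  obtain C1 where C1: "C1 > 0" "\<And>i. onorm (e i) \<le> C1" using e_bound by blast
  have FA: "L b (e i) \<in> A" for i by (rule L_A(1)[OF e_A])
  have bnd: "bnd (\<lambda>i. L b (e i))"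
    unfolding bnd_def
  proof (intro exI allI)
    fix i
    have "onorm (L b (e i)) \<le> K * onorm (e i)" by (rule K(2)[OF e_A])
    also have "\<dots> \<le> K * C1" by (rule mult_left_mono[OF C1(2) K(1)])
    finally show "onorm (L b (e i)) \<le> K * C1" .
  qed
  have SC: "SC (\<lambda>i. L b (e i)) (Tb b)"
    unfolding SC_def
  proof (intro ballI conjI)
    fix x assume x: "x \<in> A"
    show "((\<lambda>i. onorm (\<lambda>h. L b (e i) (x h) - Tb b (x h))) \<longlongrightarrow> 0) U"
    proof (rule squeeze0)
      fix i
      have eq: "(\<lambda>h. L b (e i) (x h) - Tb b (x h)) = L b (\<lambda>h. e i (x h) - x h)"
        using L_diff[OF A_comp[OF e_A x] x] L_comp[OF e_A x] by (simp add: Tb_app[OF x])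
      show "onorm (\<lambda>h. L b (e i) (x h) - Tb b (x h)) \<le> K * onorm (\<lambda>h. e i (x h) - x h)"
        unfolding eq by (rule K(2)[OF A_diff[OF A_comp[OF e_A x] x]])
      show "0 \<le> onorm (\<lambda>h. L b (e i) (x h) - Tb b (x h))"
        by (rule bop_onorm_nonneg[OF bop_cd1[OF A_bop[OF FA] Tb(1) A_bop[OF x]]])
    next
      show "((\<lambda>i. K * onorm (\<lambda>h. e i (x h) - x h)) \<longlongrightarrow> 0) U"
        by (intro tendsto_mult_right_zero au_U(1)[OF x])
    qed
    have eq2: "(\<lambda>h. x (L b (e i) h) - x (Tb b h)) = (\<lambda>h. R b x (e i h) - R b x h)" for i
    proof
      fix h
      have "x (L b (e i) h) = R b x (e i h)" using fun_cong[OF xL_eq[OF x e_A, of b i], of h] by simp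
      moreover have "x (Tb b h) = R b x h" using fun_cong[OF Tb_left[OF x, of b], of h] by simp
      ultimately show "x (L b (e i) h) - x (Tb b h) = R b x (e i h) - R b x h" by simp
    qed
    show "((\<lambda>i. onorm (\<lambda>h. x (L b (e i) h) - x (Tb b h))) \<longlongrightarrow> 0) U"
      unfolding eq2 by (rule au_U(2)[OF R_A(1)[OF x]])
  qed
  show ?thesis unfolding sl_def using FA bnd Tb(1) SC by blast
qed

lemma Tb_MA: "Tb b \<in> MA"
  by (rule MA_I[OF sl_Tb])

lemma phi0_eq: "(\<lambda>b. qclass A U (\<lambda>i. inv_into A \<iota> (b * \<iota> (e i)))) = (\<lambda>b. cls (Tb b))"
proof
  fix b show "qclass A U (\<lambda>i. inv_into A \<iota> (b * \<iota> (e i))) = cls (Tb b)"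
    using qclass_sl[OF sl_Tb[of b]] by (simp add: L_def)
qed

lemma phi0_eq_pt: "qclass A U (\<lambda>i. inv_into A \<iota> (b * \<iota> (e i))) = cls (Tb b)"
  using fun_cong[OF phi0_eq, of b] by simp

lemma Tb_add: "Tb (x + y) = (\<lambda>h. Tb x h + Tb y h)"
  by (rule Tb_unique[OF bop_add[OF Tb(1) Tb(1)], symmetric]) (simp add: Tb_app L_add_b)

lemma Tb_mult: "Tb (x * y) = (\<lambda>h. Tb x (Tb y h))"
  by (rule Tb_unique[OF bop_comp'[OF Tb(1) Tb(1)], symmetric])
     (simp add: Tb_app L_A(1) L_mult_b Tb(2)[OF L_A(1)])

lemma Tb_scale: "Tb (scaleC z x) = (\<lambda>h. scaleC z (Tb x h))"
  by (rule Tb_unique[OF bop_scale[OF Tb(1)], symmetric]) (simp add: Tb_app L_scale_b)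

lemma Tb_star: "Tb (cstar x) = adj (Tb x)"
proof (rule Tb_unique[OF adj_bop[OF Tb(1)], symmetric])
  fix a assume a: "a \<in> A"
  have ba: "bop (adj a)" by (rule A_bop[OF A_adj[OF a]])
  have "(\<lambda>h. adj (Tb x) (a h)) = adj (\<lambda>h. adj a (Tb x h))"
    using adj_comp[OF ba Tb(1)] adj_adj[OF A_bop[OF a]] by simp
  also have "(\<lambda>h. adj a (Tb x h)) = R x (adj a)" by (rule Tb_left[OF A_adj[OF a]])
  also have "adj (R x (adj a)) = L (cstar x) a"
    using adj_R[OF A_adj[OF a]] adj_adj[OF A_bop[OF a]] by simp
  finally show "(\<lambda>h. adj (Tb x) (a h)) = L (cstar x) a" .
qed

lemma Tb_\<iota>: "a \<in> A \<Longrightarrow> Tb (\<iota> a) = a"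
  by (rule Tb_unique[OF A_bop, symmetric]) (simp_all add: L_\<iota>)

lemma qhom_phi0: "qhom A U (\<lambda>b. cls (Tb b))"
  unfolding qhom_def
proof (intro conjI allI)
  show "cls (Tb b) \<in> Q A U" for b using Tb_MA by (simp add: Q_eq)
  show "cls (Tb (x + y)) = qadd A U (cls (Tb x)) (cls (Tb y))" for x y
    by (simp add: qadd_cls(1)[OF Tb_MA Tb_MA] Tb_add)
  show "cls (Tb (x * y)) = qmul A U (cls (Tb x)) (cls (Tb y))" for x y
    by (simp add: qmul_cls(1)[OF Tb_MA Tb_MA] Tb_mult)
  show "cls (Tb (scaleC z x)) = qscale A U z (cls (Tb x))" for z x
    by (simp add: qscale_cls(1)[OF Tb_MA] Tb_scale)
  show "cls (Tb (cstar x)) = qstar A U (cls (Tb x))" for x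
    by (simp add: qstar_cls(1)[OF Tb_MA] Tb_star)
qed

lemma phi0_const: "a \<in> A \<Longrightarrow> cls (Tb (\<iota> a)) = qconst A U a"
  by (simp add: Tb_\<iota> qconst_cls)

lemma phi_unique:
  assumes h: "qhom A U \<phi>" and c: "\<forall>a\<in>A. \<phi> (\<iota> a) = qconst A U a"
  shows "\<phi> = (\<lambda>b. cls (Tb b))"
proof
  fix b
  have "\<phi> b \<in> Q A U" using h by (simp add: qhom_def)
  then obtain S where S: "S \<in> MA" "\<phi> b = cls S" by (auto simp: Q_eq)
  have "S = Tb b"
  proof (rule Tb_unique[OF MA_bop[OF S(1)]])
    fix a assume a: "a \<in> A"
    have "\<phi> (b * \<iota> a) = qmul A U (\<phi> b) (\<phi> (\<iota> a))" using h by (simp add: qhom_def)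
    also have "\<dots> = qmul A U (cls S) (cls a)" using S(2) c a qconst_cls[OF a] by simp
    also have "\<dots> = cls (\<lambda>h. S (a h))" by (rule qmul_cls(1)[OF S(1) A_MA[OF a]])
    finally have e1: "\<phi> (b * \<iota> a) = cls (\<lambda>h. S (a h))" .
    have "\<phi> (b * \<iota> a) = \<phi> (\<iota> (L b a))" by (simp add: L_A(2)[OF a])
    also have "\<dots> = cls (L b a)" using c L_A(1)[OF a] qconst_cls[OF L_A(1)[OF a]] by simp
    finally have "cls (\<lambda>h. S (a h)) = cls (L b a)" using e1 by simp
    then show "(\<lambda>h. S (a h)) = L b a" by (rule cls_inj[OF qmul_cls(2)[OF S(1) A_MA[OF a]]])
  qed
  then show "\<phi> b = cls (Tb b)" using S(2) by simp
qed

lemma qhom_phi0': "qhom A U (\<lambda>b. qclass A U (\<lambda>i. inv_into A \<iota> (b * \<iota> (e i))))"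
  unfolding phi0_eq by (rule qhom_phi0)

lemma phi0_const': "\<forall>a\<in>A. (\<lambda>b. qclass A U (\<lambda>i. inv_into A \<iota> (b * \<iota> (e i)))) (\<iota> a) = qconst A U a"
  by (simp add: phi0_eq_pt phi0_const)

lemma phi_unique': "qhom A U \<phi> \<Longrightarrow> \<forall>a\<in>A. \<phi> (\<iota> a) = qconst A U a \<Longrightarrow>
    \<phi> = (\<lambda>b. qclass A U (\<lambda>i. inv_into A \<iota> (b * \<iota> (e i))))"
  unfolding phi0_eq by (rule phi_unique)

end

theorem theorem2p6:
  fixes A :: "('h::chilbert_space \<Rightarrow> 'h) set"
    and le :: "'i \<Rightarrow> 'i \<Rightarrow> bool"
    and e :: "'i \<Rightarrow> 'h \<Rightarrow> 'h"
    and U :: "'i filter"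
  assumes "cstar_subalg A"
    and "nondegenerate A"
    and "directed le"
    and "approx_unit A le e"
    and "\<exists>C. \<forall>i. onorm (e i) \<le> C"
    and "ultrafilter U"
    and "cofinal le U"
  shows "q_essential_ideal A U (qconst A U ` A) \<and>
    (\<forall>\<iota> :: ('h \<Rightarrow> 'h) \<Rightarrow> 'b::cstar_algebra. ideal_embedding A \<iota> \<longrightarrow>
       (\<exists>!\<phi>. qhom A U \<phi> \<and> (\<forall>a\<in>A. \<phi> (\<iota> a) = qconst A U a)) \<and>
       (let \<phi>0 = (\<lambda>b. qclass A U (\<lambda>i. inv_into A \<iota> (b * \<iota> (e i)))) in
          qhom A U \<phi>0 \<and> (\<forall>a\<in>A. \<phi>0 (\<iota> a) = qconst A U a)))"
proof -
  have msI: "ms A le e U" using assms by (simp add: ms_def)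
  interpret M: ms A le e U by (rule msI)
  show ?thesis
  proof (intro conjI allI impI)
    show "q_essential_ideal A U (qconst A U ` A)" by (rule M.essential)
  next
    fix \<iota> :: "('h \<Rightarrow> 'h) \<Rightarrow> 'b::cstar_algebra"
    assume emb: "ideal_embedding A \<iota>"
    interpret E: ms_emb A le e U \<iota>
      by (rule ms_emb.intro[OF msI]) (simp add: ms_emb_axioms_def emb)
    show "\<exists>!\<phi>. qhom A U \<phi> \<and> (\<forall>a\<in>A. \<phi> (\<iota> a) = qconst A U a)"
    proof (rule ex1I[of _ "\<lambda>b. qclass A U (\<lambda>i. inv_into A \<iota> (b * \<iota> (e i)))"])
      show "qhom A U (\<lambda>b. qclass A U (\<lambda>i. inv_into A \<iota> (b * \<iota> (e i)))) \<and>
          (\<forall>a\<in>A. (\<lambda>b. qclass A U (\<lambda>i. inv_into A \<iota> (b * \<iota> (e i)))) (\<iota> a) = qconst A U a)"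
        using E.qhom_phi0' E.phi0_const' by (rule conjI)
      fix \<phi> assume h: "qhom A U \<phi> \<and> (\<forall>a\<in>A. \<phi> (\<iota> a) = qconst A U a)"
      show "\<phi> = (\<lambda>b. qclass A U (\<lambda>i. inv_into A \<iota> (b * \<iota> (e i))))"
        using E.phi_unique'[OF conjunct1[OF h] conjunct2[OF h]] .
    qed
    show "let \<phi>0 = (\<lambda>b. qclass A U (\<lambda>i. inv_into A \<iota> (b * \<iota> (e i)))) in
          qhom A U \<phi>0 \<and> (\<forall>a\<in>A. \<phi>0 (\<iota> a) = qconst A U a)"
      unfolding Let_def using E.qhom_phi0' E.phi0_const' by (rule conjI)
  qed
qed


end
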